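(* Let $c\in\mathbb{R}$, $\beta\geq0$, $q\in(0,1)$, $Q=q^2$, $y=e^{-2\beta}$, let $J(i)=i$ for all $i\in\mathbb{Z}$, and assume $$\sum_{i=-\infty}^0 \left(1+q^{2(i-c)}\frac{e^{\beta J(i-1)}}{e^{\beta |J(i)|}+q^2 e^{\beta |J(i-2)|}}\right)^{-1} + \sum_{i=1}^\infty \left(1+q^{-2(i-c)}\frac{e^{\beta J(i-1)}}{e^{\beta |J(i)|}+q^{-2} e^{\beta |J(i-2)|}}\right)^{-1}<\infty.$$ Then for $n\in\mathbb{Z}$, $$Z_{\beta,q,c}^{J}\,\mu_{J}^c\big(\mathbb{1}_{\{N=0\}}e^{-n\beta H_1}\big) = e^{-n\beta} + \sum_{L,R>0} y^{nL+(n-1)R}\sum_{\substack{\ell_1,\dots,\ell_L\geq 1 \\ m_1,\dots,m_{R}\geq 1}}\mathbb{1}_{\{\sum_{j=1}^R m_j= \sum_{j=1}^L\ell_j\}}\prod_{j=1}^{L} \frac{Q^{\frac12 \ell_{j}(\ell_{j}-1)}\big(y^{-(L-j+1)}Q^{\ell_{j}+\cdots + \ell_{L}}\big)^{\ell_{j-1}+1}}{1-y^{-(L-j+1)}Q^{\ell_{j}+\cdots + \ell_{L}}} \prod_{j=1}^{R}\frac{Q^{\frac12 m_{j}(m_{j}-1)}\big(y^{R-j+1}Q^{m_{j}+\cdots+m_{R}}\big)^{m_{j-1}+1}}{1-y^{R-j+1}Q^{m_{j}+\cdots+m_{R}}}\Big(y^{-n/2}+\big(y^{n/2}-y^{-n/2}\big)y^{R-L}Q^{\ell_1+\cdots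 + \ell_L}Q^{m_{1}+\cdots+m_{R}}\Big),$$ with the conventions $\ell_0=-1$, $m_0=0$.
   Context: Spin configurations are $\sigma\in\{-1,+1\}^{\mathbb{Z}}$; $\mathcal{B}$ is the set of configurations for which there exist $a,b\in\mathbb{Z}$ with $\sigma_{a-i}=-1$ and $\sigma_{b+i}=+1$ for all $i\in\mathbb{N}$. $H_J(\sigma)=\sum_{i\in\mathbb{Z}}J(i)\mathbb{1}_{\{\sigma_i\neq\sigma_{i+1}\}}$ and $H_1(\sigma)=\sum_{i\in\mathbb{Z}}\mathbb{1}_{\{\sigma_i\neq\sigma_{i+1}\}}$; $f_c(\sigma)=2\sum_{i=1}^\infty(i-c)\mathbb{1}_{\{\sigma_i=-1\}}-2\sum_{i=-\infty}^0(i-c)\mathbb{1}_{\{\sigma_i=1\}}$; $Z^J_{\beta,q,c}=\sum_\sigma e^{-\beta H_J(\sigma)}q^{f_c(\sigma)}$ and $\mu^c_J(\sigma)=e^{-\beta H_J(\sigma)}q^{f_c(\sigma)}/Z^J_{\beta,q,c}$, concentrated on $\mathcal{B}$ under the summability condition. For $\sigma\in\mathcal{B}$, $N(\sigma)=\#\{i\geq1:\sigma_i=-1\}-\#\{i\leq 0:\sigma_i=+1\}$; $\mu^c_J(F)$ is the expectation of $F$. $L,R$ range over positive integers and $\ell_j,m_j$ over positive integers. *)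

theory Defs
  imports "HOL-Analysis.Analysis"
begin

definition spin_configs :: "(int \<Rightarrow> int) set" where
  "spin_configs = {\<sigma>. \<forall>i. \<sigma> i = -1 \<or> \<sigma> i = 1}"

definition B_set :: "(int \<Rightarrow> int) set" where
  "B_set = {\<sigma> \<in> spin_configs. \<exists>a b. \<forall>i::nat. \<sigma> (a - int i) = -1 \<and> \<sigma> (b + int i) = 1}"

definition H :: "(int \<Rightarrow> real) \<Rightarrow> (int \<Rightarrow> int) \<Rightarrow> real" where
  "H J \<sigma> = (\<Sum>i\<in>{i. \<sigma> i \<noteq> \<sigma> (i+1)}. J i)"

definition H1 :: "(int \<Rightarrow> int) \<Rightarrow> real" where
  "H1 \<sigma> = H (\<lambda>_. 1) \<sigma>"

definition fc :: "real \<Rightarrow> (int \<Rightarrow> int) \<Rightarrow> real" where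
  "fc c \<sigma> = 2 * (\<Sum>i\<in>{i. i \<ge> 1 \<and> \<sigma> i = -1}. (real_of_int i - c))
             - 2 * (\<Sum>i\<in>{i. i \<le> 0 \<and> \<sigma> i = 1}. (real_of_int i - c))"

definition weight :: "(int \<Rightarrow> real) \<Rightarrow> real \<Rightarrow> real \<Rightarrow> real \<Rightarrow> (int \<Rightarrow> int) \<Rightarrow> real" where
  "weight J \<beta> q c \<sigma> = exp (- \<beta> * H J \<sigma>) * q powr (fc c \<sigma>)"

text \<open>Partition function (sum over the configurations in B, where the measure is concentrated).\<close>
definition Zpart :: "(int \<Rightarrow> real) \<Rightarrow> real \<Rightarrow> real \<Rightarrow> real \<Rightarrow> real" where
  "Zpart J \<beta> q c = (\<Sum>\<^sub>\<infinity>\<sigma>\<in>B_set. weight J \<beta> q c \<sigma>)"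

definition mu :: "(int \<Rightarrow> real) \<Rightarrow> real \<Rightarrow> real \<Rightarrow> real \<Rightarrow> ((int \<Rightarrow> int) \<Rightarrow> real) \<Rightarrow> real" where
  "mu J \<beta> q c F = (\<Sum>\<^sub>\<infinity>\<sigma>\<in>B_set. weight J \<beta> q c \<sigma> * F \<sigma>) / Zpart J \<beta> q c"

definition Ncount :: "(int \<Rightarrow> int) \<Rightarrow> int" where
  "Ncount \<sigma> = int (card {i. i \<ge> 1 \<and> \<sigma> i = -1}) - int (card {i. i \<le> 0 \<and> \<sigma> i = 1})"

definition seqv :: "int \<Rightarrow> nat list \<Rightarrow> nat \<Rightarrow> int" where
  "seqv d ls j = (if j = 0 then d else int (ls ! (j - 1)))"

definition tailsum :: "nat list \<Rightarrow> nat \<Rightarrow> nat" where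
  "tailsum ls j = (\<Sum>k\<in>{j..length ls}. ls ! (k - 1))"

definition left_factor :: "real \<Rightarrow> real \<Rightarrow> nat list \<Rightarrow> real" where
  "left_factor y Q ls = (\<Prod>j\<in>{1..length ls}.
     (let L = length ls;
          x = y powr (- real (L - j + 1)) * Q powr real (tailsum ls j);
          lj = real (ls ! (j - 1))
      in Q powr (lj * (lj - 1) / 2) * x powr real_of_int (seqv (-1) ls (j - 1) + 1) / (1 - x)))"

definition right_factor :: "real \<Rightarrow> real \<Rightarrow> nat list \<Rightarrow> real" where
  "right_factor y Q ms = (\<Prod>j\<in>{1..length ms}.
     (let R = length ms;
          x = y powr (real (R - j + 1)) * Q powr real (tailsum ms j);
          mj = real (ms ! (j - 1))
      in Q powr (mj * (mj - 1) / 2) * x powr real_of_int (seqv 0 ms (j - 1) + 1) / (1 - x)))"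

definition tuples :: "nat \<Rightarrow> nat \<Rightarrow> (nat list \<times> nat list) set" where
  "tuples L R = {(ls, ms). length ls = L \<and> length ms = R \<and> (\<forall>x\<in>set ls. x \<ge> 1)
                  \<and> (\<forall>x\<in>set ms. x \<ge> 1) \<and> sum_list ms = sum_list ls}"

definition inner_term :: "real \<Rightarrow> real \<Rightarrow> int \<Rightarrow> nat list \<Rightarrow> nat list \<Rightarrow> real" where
  "inner_term y Q n ls ms = left_factor y Q ls * right_factor y Q ms *
     (y powr (- real_of_int n / 2) + (y powr (real_of_int n / 2) - y powr (- real_of_int n / 2))
        * y powr (real (length ms) - real (length ls)) * Q powr real (sum_list ls) * Q powr real (sum_list ms))"

end

theory Submission
  imports Defs
begin
fun P :: "nat list \<Rightarrow> int list \<Rightarrow> int set" where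
  "P [] _ = {}"
| "P (m#ms) [] = {}"
| "P (m#ms) (t#ts) = (\<lambda>i. i + t) ` ({0..<int m} \<union> P ms ts)"

fun V :: "int \<Rightarrow> nat list \<Rightarrow> int list \<Rightarrow> bool" where
  "V b [] ts = (ts = [])"
| "V b (m#ms) [] = False"
| "V b (m#ms) (t#ts) = (1 \<le> m \<and> b \<le> t \<and> V (int m + 1) ms ts)"

definition D :: "int set \<Rightarrow> int set" where
  "D X = {w. (w \<in> X) \<noteq> (w + 1 \<in> X)}"

lemma P_ge: "V b ms ts \<Longrightarrow> P ms ts \<subseteq> {b..}"
proof (induction ms arbitrary: b ts)
  case Nil then show ?case by simp
next
  case (Cons m ms)
  then obtain t ts' where ts: "ts = t # ts'" by (cases ts) auto
  from Cons.prems ts have v: "1 \<le> m" "b \<le> t" "V (int m + 1) ms ts'" by auto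
  from Cons.IH[OF v(3)] have "P ms ts' \<subseteq> {int m + 1..}" .
  then show ?case using ts v by auto
qed

lemma P_finite: "finite (P ms ts)"
  by (induction ms ts rule: P.induct) auto

lemma P_card: "V b ms ts \<Longrightarrow> card (P ms ts) = sum_list ms"
proof (induction ms arbitrary: b ts)
  case Nil then show ?case by simp
next
  case (Cons m ms)
  then obtain t ts' where ts: "ts = t # ts'" by (cases ts) auto
  from Cons.prems ts have v: "1 \<le> m" "b \<le> t" "V (int m + 1) ms ts'" by auto
  have ge: "P ms ts' \<subseteq> {int m + 1..}" using P_ge[OF v(3)] .
  have disj: "{0..<int m} \<inter> P ms ts' = {}" using ge by auto
  have "card (P (m#ms) ts) = card ({0..<int m} \<union> P ms ts')"
    using ts by (simp add: card_image inj_on_def)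
  also have "\<dots> = m + card (P ms ts')"
    using disj by (subst card_Un_disjoint) (auto simp: P_finite)
  finally show ?case using Cons.IH[OF v(3)] by simp
qed

lemma D_shift: "D ((\<lambda>i. i + t) ` X) = (\<lambda>i. i + t) ` D X"
proof -
  have img: "(x \<in> (\<lambda>i::int. i + t) ` S) = (x - t \<in> S)" for S x
    by (auto simp: image_iff) (metis diff_add_cancel)
  have "w \<in> D ((\<lambda>i. i + t) ` X) \<longleftrightarrow> w \<in> (\<lambda>i. i + t) ` D X" for w
    unfolding img D_def by (simp add: algebra_simps)
  then show ?thesis by blast
qed

lemma D_block: assumes "Y \<subseteq> {int m + 1..}" "1 \<le> m"
  shows "D ({0..<int m} \<union> Y) = {-1, int m - 1} \<union> D Y"
proof -
  have "w \<in> D ({0..<int m} \<union> Y) \<longleftrightarrow> w \<in> {-1, int m - 1} \<union> D Y" for w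
  proof (cases "w \<le> int m - 1")
    case True
    then have "w \<notin> Y" "w + 1 \<notin> Y" using assms by auto
    then show ?thesis using True assms unfolding D_def by auto
  next
    case False
    then show ?thesis using assms unfolding D_def by auto
  qed
  then show ?thesis by blast
qed

lemma D_sub: "X \<subseteq> {c..} \<Longrightarrow> D X \<subseteq> {c - 1..}"
  unfolding D_def by force

lemma D_P_finite: "finite (D (P ms ts))"
proof -
  have "D (P ms ts) \<subseteq> P ms ts \<union> (\<lambda>i. i - 1) ` P ms ts"
    unfolding D_def by (auto simp: image_iff) (metis add_diff_cancel_right')
  then show ?thesis using P_finite finite_subset by blast
qed

lemma P_D_cons:
  assumes "V b (m#ms) (t#ts)"
  shows "D (P (m#ms) (t#ts)) = (\<lambda>i. i + t) ` ({-1, int m - 1} \<union> D (P ms ts))"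
    and "{-1, int m - 1} \<inter> D (P ms ts) = {}"
    and "int m - 1 \<noteq> -1"
proof -
  from assms have v: "1 \<le> m" "b \<le> t" "V (int m + 1) ms ts" by auto
  have ge: "P ms ts \<subseteq> {int m + 1..}" using P_ge[OF v(3)] .
  show "D (P (m#ms) (t#ts)) = (\<lambda>i. i + t) ` ({-1, int m - 1} \<union> D (P ms ts))"
    by (simp add: D_shift D_block[OF ge v(1)])
  show "{-1, int m - 1} \<inter> D (P ms ts) = {}" using D_sub[OF ge] v(1) by auto
  show "int m - 1 \<noteq> -1" using v(1) by auto
qed

lemma P_Dcard: "V b ms ts \<Longrightarrow> card (D (P ms ts)) = 2 * length ms"
proof (induction ms arbitrary: b ts)
  case Nil then show ?case by (simp add: D_def)
next
  case (Cons m ms)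
  then obtain t ts' where ts: "ts = t # ts'" by (cases ts) auto
  from Cons.prems ts have v: "V (int m + 1) ms ts'" by auto
  note d = P_D_cons[OF Cons.prems[unfolded ts]]
  have "card (D (P (m#ms) ts)) = card ((\<lambda>i. i + t) ` ({-1, int m - 1} \<union> D (P ms ts')))"
    by (simp only: ts d(1))
  also have "\<dots> = card ({-1, int m - 1} \<union> D (P ms ts'))"
    by (rule card_image) (simp add: inj_on_def)
  also have "\<dots> = 2 + card (D (P ms ts'))"
    using d(2,3) by (subst card_Un_disjoint) (auto simp: D_P_finite)
  finally show ?case using Cons.IH[OF v] by simp
qed

lemma P_Dsum: "V b (m#ms) (t#ts) \<Longrightarrow>
  (\<Sum>w\<in>D (P (m#ms) (t#ts)). w) = t * (2 + 2 * int (length ms)) + (int m - 2) + (\<Sum>w\<in>D (P ms ts). w)"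
proof -
  assume a: "V b (m#ms) (t#ts)"
  then have v: "V (int m + 1) ms ts" by auto
  note d = P_D_cons[OF a]
  have "(\<Sum>w\<in>D (P (m#ms) (t#ts)). w) = (\<Sum>w\<in>{-1, int m - 1} \<union> D (P ms ts). w + t)"
    unfolding d(1) by (rule sum.reindex_cong[where l="\<lambda>i. i + t"]) (auto simp: inj_on_def)
  also have "\<dots> = (\<Sum>w\<in>{-1, int m - 1}. w + t) + (\<Sum>w\<in>D (P ms ts). w + t)"
    using d(2) by (subst sum.union_disjoint) (auto simp: D_P_finite)
  also have "(\<Sum>w\<in>{-1, int m - 1}. w + t) = 2 * t + int m - 2" using d(3) by simp
  also have "(\<Sum>w\<in>D (P ms ts). w + t) = (\<Sum>w\<in>D (P ms ts). w) + t * 2 * int (length ms)"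
    by (simp add: sum.distrib P_Dcard[OF v])
  finally show ?thesis by (simp add: algebra_simps)
qed

lemma P_sum: "V b (m#ms) (t#ts) \<Longrightarrow>
  (\<Sum>i\<in>P (m#ms) (t#ts). i) = t * (int m + int (sum_list ms)) + int m * (int m - 1) div 2 + (\<Sum>i\<in>P ms ts. i)"
proof -
  assume a: "V b (m#ms) (t#ts)"
  then have v: "1 \<le> m" "V (int m + 1) ms ts" by auto
  have ge: "P ms ts \<subseteq> {int m + 1..}" using P_ge[OF v(2)] .
  have disj: "{0..<int m} \<inter> P ms ts = {}" using ge by auto
  have "(\<Sum>i\<in>P (m#ms) (t#ts). i) = (\<Sum>i\<in>{0..<int m} \<union> P ms ts. i + t)"
    unfolding P.simps by (rule sum.reindex_cong[where l="\<lambda>i. i + t"]) (auto simp: inj_on_def)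
  also have "\<dots> = (\<Sum>i\<in>{0..<int m}. i + t) + (\<Sum>i\<in>P ms ts. i + t)"
    using disj by (subst sum.union_disjoint) (auto simp: P_finite)
  also have "(\<Sum>i\<in>P ms ts. i + t) = (\<Sum>i\<in>P ms ts. i) + t * int (sum_list ms)"
    by (simp add: sum.distrib P_card[OF v(2)])
  also have "(\<Sum>i\<in>{0..<int m}. i + t) = int m * (int m - 1) div 2 + t * int m"
  proof -
    have "(\<Sum>i\<in>{0..<int m}. i) = int m * (int m - 1) div 2"
    proof (induction m)
      case 0 then show ?case by simp
    next
      case (Suc k)
      have "{0..<int (Suc k)} = insert (int k) {0..<int k}" by auto
      then show ?case using Suc by (simp add: algebra_simps)
    qed
    then show ?thesis by (simp add: sum.distrib)
  qed
  finally show ?thesis by (simp add: algebra_simps)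
qed

lemma img_shift: "(x \<in> (\<lambda>i::int. i + t) ` S) = (x - t \<in> S)"
  by (auto simp: image_iff) (metis diff_add_cancel)

lemma P_cons_facts:
  assumes "V b (m#ms) (t#ts)"
  shows "t \<in> P (m#ms) (t#ts)" "\<And>i. i \<in> P (m#ms) (t#ts) \<Longrightarrow> t \<le> i"
    "\<And>k. 0 \<le> k \<Longrightarrow> k < int m \<Longrightarrow> t + k \<in> P (m#ms) (t#ts)"
    "t + int m \<notin> P (m#ms) (t#ts)"
proof -
  from assms have v: "1 \<le> m" "b \<le> t" "V (int m + 1) ms ts" by auto
  have ge: "P ms ts \<subseteq> {int m + 1..}" using P_ge[OF v(3)] .
  show "t \<in> P (m#ms) (t#ts)" using v(1) by (simp add: img_shift)
  show "\<And>i. i \<in> P (m#ms) (t#ts) \<Longrightarrow> t \<le> i" using ge by (auto simp: img_shift)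
  show "\<And>k. 0 \<le> k \<Longrightarrow> k < int m \<Longrightarrow> t + k \<in> P (m#ms) (t#ts)" by (simp add: img_shift)
  show "t + int m \<notin> P (m#ms) (t#ts)" using ge by (auto simp: img_shift)
qed

lemma P_nonempty: "V b (m#ms) ts \<Longrightarrow> P (m#ms) ts \<noteq> {}"
  by (cases ts) (auto dest: P_cons_facts(1))

lemma P_inj: "V b ms ts \<Longrightarrow> V b' ms' ts' \<Longrightarrow> P ms ts = P ms' ts' \<Longrightarrow> ms = ms' \<and> ts = ts'"
proof (induction ms arbitrary: b ts b' ms' ts')
  case Nil
  then have "ts = []" by simp
  moreover have "ms' = []"
  proof (rule ccontr)
    assume "ms' \<noteq> []"
    then obtain m' ms'' where "ms' = m' # ms''" by (cases ms') auto
    then show False using Nil P_nonempty by fastforce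
  qed
  ultimately show ?case using Nil by simp
next
  case (Cons m ms)
  obtain t ts0 where ts: "ts = t # ts0" using Cons.prems(1) by (cases ts) auto
  have ne: "P (m#ms) ts \<noteq> {}" using P_nonempty Cons.prems(1) by blast
  obtain m' ms'' where ms': "ms' = m' # ms''"
    using Cons.prems ne by (cases ms') auto
  obtain t' ts'' where ts': "ts' = t' # ts''" using Cons.prems(2) ms' by (cases ts') auto
  note v1 = Cons.prems(1)[unfolded ts] and v2 = Cons.prems(2)[unfolded ms' ts']
  note eq = Cons.prems(3)[unfolded ts ms' ts']
  have tt: "t = t'"
  proof -
    have "t \<le> t'" using P_cons_facts(2)[OF v1, of t'] P_cons_facts(1)[OF v2] eq by (simp del: P.simps)
    moreover have "t' \<le> t" using P_cons_facts(2)[OF v2, of t] P_cons_facts(1)[OF v1] eq by (simp del: P.simps)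
    ultimately show ?thesis by simp
  qed
  have mm: "m = m'"
  proof (rule ccontr)
    assume "m \<noteq> m'"
    then consider "int m < int m'" | "int m' < int m" by linarith
    then show False
    proof cases
      case 1
      have "t' + int m \<in> P (m'#ms'') (t'#ts'')" using P_cons_facts(3)[OF v2, of "int m"] 1 by simp
      moreover have "t + int m \<notin> P (m#ms) (t#ts0)" using P_cons_facts(4)[OF v1] .
      ultimately show False using eq tt by (simp del: P.simps)
    next
      case 2
      have "t + int m' \<in> P (m#ms) (t#ts0)" using P_cons_facts(3)[OF v1, of "int m'"] 2 by simp
      moreover have "t' + int m' \<notin> P (m'#ms'') (t'#ts'')" using P_cons_facts(4)[OF v2] .
      ultimately show False using eq tt by (simp del: P.simps)
    qed
  qed
  from v1 have w1: "V (int m + 1) ms ts0" by simp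
  from v2 mm have w2: "V (int m + 1) ms'' ts''" by simp
  have g1: "P ms ts0 \<subseteq> {int m + 1..}" using P_ge[OF w1] .
  have g2: "P ms'' ts'' \<subseteq> {int m + 1..}" using P_ge[OF w2] .
  have "(\<lambda>i. i + t) ` ({0..<int m} \<union> P ms ts0) = (\<lambda>i. i + t) ` ({0..<int m} \<union> P ms'' ts'')"
    using eq tt mm by (simp only: P.simps)
  then have e2: "{0..<int m} \<union> P ms ts0 = {0..<int m} \<union> P ms'' ts''"
    by (subst (asm) inj_image_eq_iff) (auto simp: inj_def)
  have "P ms ts0 = ({0..<int m} \<union> P ms ts0) - {0..<int m}" using g1 by auto
  also have "\<dots> = ({0..<int m} \<union> P ms'' ts'') - {0..<int m}" using e2 by simp
  also have "\<dots> = P ms'' ts''" using g2 by auto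
  finally have "P ms ts0 = P ms'' ts''" .
  from Cons.IH[OF w1 w2 this] show ?case using ts ms' ts' tt mm by simp
qed

lemma P_surj: "finite X \<Longrightarrow> X \<subseteq> {b..} \<Longrightarrow> \<exists>ms ts. V b ms ts \<and> P ms ts = X"
proof (induction "card X" arbitrary: X b rule: less_induct)
  case less
  show ?case
  proof (cases "X = {}")
    case True
    then show ?thesis by (intro exI[of _ "[]"]) auto
  next
    case False
    define t where "t = Min X"
    have tX: "t \<in> X" using False less.prems t_def by simp
    have tmin: "\<And>i. i \<in> X \<Longrightarrow> t \<le> i" using less.prems t_def by simp
    have tb: "b \<le> t" using tX less.prems by auto
    have exk: "\<exists>k::nat. t + int k \<notin> X"
    proof (rule ccontr)
      assume "\<not> ?thesis"
      then have "(\<lambda>k::nat. t + int k) ` UNIV \<subseteq> X" by auto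
      moreover have "inj (\<lambda>k::nat. t + int k)" by (simp add: inj_def)
      ultimately have "infinite X" using finite_imageD finite_subset infinite_UNIV_nat by blast
      then show False using less.prems by simp
    qed
    define m where "m = (LEAST k::nat. t + int k \<notin> X)"
    have mX: "t + int m \<notin> X" using LeastI_ex[OF exk] m_def by simp
    have below: "\<And>k::nat. k < m \<Longrightarrow> t + int k \<in> X" using not_less_Least m_def by blast
    have m1: "1 \<le> m" using tX mX by (cases m) auto
    define Y where "Y = ((\<lambda>i. i - t) ` X) - {0..<int m}"
    have Ysub: "Y \<subseteq> {int m + 1..}"
    proof
      fix z assume "z \<in> Y"
      then obtain i where i: "i \<in> X" "z = i - t" "\<not> (0 \<le> z \<and> z < int m)" unfolding Y_def by auto
      have "z \<ge> 0" using tmin[OF i(1)] i(2) by simp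
      moreover have "z \<noteq> int m"
      proof
        assume "z = int m"
        then have "i = t + int m" using i(2) by simp
        then show False using mX i(1) by simp
      qed
      ultimately show "z \<in> {int m + 1..}" using i(3) by auto
    qed
    have finY: "finite Y" using less.prems unfolding Y_def by simp
    have z0: "0 \<in> (\<lambda>i. i - t) ` X" using tX by (auto simp: image_iff intro!: bexI[of _ t])
    have "card Y < card ((\<lambda>i. i - t) ` X)"
    proof (rule psubset_card_mono)
      show "finite ((\<lambda>i. i - t) ` X)" using less.prems by simp
      have "0 \<notin> Y" unfolding Y_def using m1 by simp
      moreover have "Y \<subseteq> (\<lambda>i. i - t) ` X" unfolding Y_def by blast
      ultimately show "Y \<subset> (\<lambda>i. i - t) ` X" using z0 by blast
    qed
    also have "\<dots> = card X" by (rule card_image) (simp add: inj_on_def)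
    finally have "card Y < card X" .
    from less.hyps[OF this finY Ysub] obtain ms ts where
      v: "V (int m + 1) ms ts" "P ms ts = Y" by blast
    have "P (m#ms) (t#ts) = X"
    proof -
      have "x \<in> P (m#ms) (t#ts) \<longleftrightarrow> x \<in> X" for x
      proof -
        have "x \<in> P (m#ms) (t#ts) \<longleftrightarrow> (0 \<le> x - t \<and> x - t < int m) \<or> x - t \<in> Y"
          using v(2) by (simp add: img_shift)
        also have "\<dots> \<longleftrightarrow> x \<in> X"
        proof
          assume "(0 \<le> x - t \<and> x - t < int m) \<or> x - t \<in> Y"
          then show "x \<in> X"
          proof
            assume a: "0 \<le> x - t \<and> x - t < int m"
            then have "t + int (nat (x - t)) \<in> X" using below[of "nat (x - t)"] by auto
            then show "x \<in> X" using a by simp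
          next
            assume "x - t \<in> Y"
            then show "x \<in> X" unfolding Y_def by (auto simp: image_iff)
          qed
        next
          assume "x \<in> X"
          then show "(0 \<le> x - t \<and> x - t < int m) \<or> x - t \<in> Y"
            unfolding Y_def by (auto simp: image_iff)
        qed
        finally show ?thesis .
      qed
      then show ?thesis by blast
    qed
    moreover have "V b (m#ms) (t#ts)" using v m1 tb by simp
    ultimately show ?thesis by blast
  qed
qed

lemma has_sum_times_nonneg:
  fixes f g :: "_ \<Rightarrow> real"
  assumes "(f has_sum a) A" "(g has_sum b) B" "\<And>x. x \<in> A \<Longrightarrow> f x \<ge> 0" "\<And>y. y \<in> B \<Longrightarrow> g y \<ge> 0"
  shows "((\<lambda>(x,y). f x * g y) has_sum (a * b)) (A \<times> B)"
proof -
  have inner: "((\<lambda>y. (\<lambda>(x,y). f x * g y) (x, y)) has_sum (f x * b)) B" if "x \<in> A" for x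
    using has_sum_cmult_right[OF assms(2), of "f x"] by simp
  have outer: "((\<lambda>x. f x * b) has_sum (a * b)) A"
    using has_sum_cmult_left[OF assms(1)] by simp
  have summ: "(\<lambda>(x,y). f x * g y) summable_on Sigma A (\<lambda>_. B)"
    by (rule summable_on_SigmaI[OF inner]) (use outer assms(3,4) in \<open>auto simp: has_sum_imp_summable\<close>)
  show ?thesis using has_sum_SigmaI[OF inner outer summ] by simp
qed

lemma has_sum_geom_int:
  fixes x :: real
  assumes "0 < x" "x < 1"
  shows "((\<lambda>t::int. x powr real_of_int t) has_sum (x powr real_of_int b / (1 - x))) {b..}"
proof -
  have "((\<lambda>n::nat. x ^ n) has_sum (1 / (1 - x))) UNIV"
    by (rule sums_nonneg_imp_has_sum) (use assms geometric_sums[of x] in auto)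
  from has_sum_cmult_right[OF this, of "x powr real_of_int b"]
  have h: "((\<lambda>n::nat. x powr real_of_int b * x ^ n) has_sum (x powr real_of_int b / (1 - x))) UNIV"
    by simp
  have "((\<lambda>t::int. x powr real_of_int t) has_sum (x powr real_of_int b / (1 - x))) ((\<lambda>n::nat. b + int n) ` UNIV)"
  proof (subst has_sum_reindex)
    show "inj_on (\<lambda>n::nat. b + int n) UNIV" by (simp add: inj_on_def)
    show "((\<lambda>t. x powr real_of_int t) \<circ> (\<lambda>n::nat. b + int n) has_sum x powr real_of_int b / (1 - x)) UNIV"
      using h by (simp add: o_def powr_add powr_realpow assms)
  qed
  moreover have "(\<lambda>n::nat. b + int n) ` UNIV = {b..}"
  proof -
    have "t \<in> (\<lambda>n::nat. b + int n) ` UNIV" if "b \<le> t" for t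
      using that by (intro image_eqI[of _ _ "nat (t - b)"]) auto
    then show ?thesis by auto
  qed
  ultimately show ?thesis by simp
qed

definition wt :: "real \<Rightarrow> real \<Rightarrow> real \<Rightarrow> nat list \<Rightarrow> int list \<Rightarrow> real" where
  "wt Q y e ms ts = Q powr real_of_int (\<Sum>i\<in>P ms ts. i) * y powr (e * real_of_int (\<Sum>w\<in>D (P ms ts). w) / 2)"

fun Gc :: "real \<Rightarrow> real \<Rightarrow> real \<Rightarrow> int \<Rightarrow> nat list \<Rightarrow> real" where
  "Gc Q y e b [] = 1"
| "Gc Q y e b (m#ms) = (let x = y powr (e * real (1 + length ms)) * Q powr real (m + sum_list ms) in
      x powr real_of_int b / (1 - x)) * Q powr (real m * (real m - 1) / 2) * y powr (e * (real m - 2) / 2)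
      * Gc Q y e (int m + 1) ms"

lemma even_prod_int: "real_of_int (int m * (int m - 1) div 2) = real m * (real m - 1) / 2"
proof -
  have "even (int m * (int m - 1))" by simp
  then obtain k where k: "int m * (int m - 1) = 2 * k" by blast
  then have "real_of_int (int m * (int m - 1)) = real_of_int (2 * k)" by simp
  then have "real m * (real m - 1) = 2 * real_of_int k" by simp
  then show ?thesis using k by simp
qed

lemma wt_cons:
  assumes "V b (m#ms) (t#ts)" "0 < Q" "0 < y"
  shows "wt Q y e (m#ms) (t#ts) = (y powr (e * real (1 + length ms)) * Q powr real (m + sum_list ms)) powr real_of_int t
     * (Q powr (real m * (real m - 1) / 2) * y powr (e * (real m - 2) / 2) * wt Q y e ms ts)"
proof -
  note s1 = P_sum[OF assms(1)] and s2 = P_Dsum[OF assms(1)]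
  define S where "S = (\<Sum>i\<in>P ms ts. i)"
  define W where "W = (\<Sum>w\<in>D (P ms ts). w)"
  have "wt Q y e (m#ms) (t#ts) = Q powr (real_of_int t * (real m + real (sum_list ms)) + real m * (real m - 1) / 2 + real_of_int S)
      * y powr (e * (real_of_int t * (2 + 2 * real (length ms)) + (real m - 2) + real_of_int W) / 2)"
    unfolding wt_def s1 s2 S_def W_def by (simp add: even_prod_int[symmetric])
  also have "e * (real_of_int t * (2 + 2 * real (length ms)) + (real m - 2) + real_of_int W) / 2
       = e * real_of_int t * (1 + real (length ms)) + e * (real m - 2) / 2 + e * real_of_int W / 2"
    by (simp add: field_simps)
  also have "Q powr (real_of_int t * (real m + real (sum_list ms)) + real m * (real m - 1) / 2 + real_of_int S)
      * y powr (e * real_of_int t * (1 + real (length ms)) + e * (real m - 2) / 2 + e * real_of_int W / 2)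
     = (Q powr (real_of_int t * (real m + real (sum_list ms))) * y powr (e * real_of_int t * (1 + real (length ms))))
      * (Q powr (real m * (real m - 1) / 2) * y powr (e * (real m - 2) / 2) * (Q powr real_of_int S * y powr (e * real_of_int W / 2)))"
    by (simp only: powr_add mult_ac)
  also have "Q powr (real_of_int t * (real m + real (sum_list ms))) * y powr (e * real_of_int t * (1 + real (length ms)))
     = (y powr (e * real (1 + length ms)) * Q powr real (m + sum_list ms)) powr real_of_int t"
    using assms(2,3) by (simp add: powr_mult powr_powr algebra_simps)
  finally show ?thesis unfolding wt_def S_def W_def by simp
qed

lemma Vset_cons: "{ts. V b (m#ms) ts} = (\<lambda>(t,ts). t#ts) ` ({t. 1 \<le> m \<and> b \<le> t} \<times> {ts. V (int m + 1) ms ts})"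
proof -
  have "ts \<in> (\<lambda>(t,ts). t#ts) ` ({t. 1 \<le> m \<and> b \<le> t} \<times> {ts. V (int m + 1) ms ts})" if "V b (m#ms) ts" for ts
    using that by (cases ts) (auto simp: image_iff)
  then show ?thesis by auto
qed

lemma wt_nonneg: "0 \<le> Q \<Longrightarrow> 0 \<le> y \<Longrightarrow> 0 \<le> wt Q y e ms ts"
  unfolding wt_def by simp

lemma Gc_has_sum:
  assumes Q: "0 < Q" and y: "0 < y"
    and x1: "\<And>k s. 1 \<le> k \<Longrightarrow> k \<le> s \<Longrightarrow> y powr (e * real k) * Q powr real s < 1"
    and pos: "\<forall>x\<in>set ms. 1 \<le> x"
  shows "(wt Q y e ms has_sum Gc Q y e b ms) {ts. V b ms ts}"
  using pos
proof (induction ms arbitrary: b)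
  case Nil
  have e: "{ts. V b [] ts} = {[]}" by auto
  have "wt Q y e [] [] = 1" using Q y by (simp add: wt_def D_def)
  then show ?case unfolding e using has_sum_finite[where f="wt Q y e []" and F="{[]}"] by simp
next
  case (Cons m ms)
  have m1: "1 \<le> m" using Cons.prems by simp
  define x where "x = y powr (e * real (1 + length ms)) * Q powr real (m + sum_list ms)"
  define c where "c = Q powr (real m * (real m - 1) / 2) * y powr (e * (real m - 2) / 2)"
  have sl: "length ms \<le> sum_list ms"
    using Cons.prems by (induction ms) auto
  have x0: "0 < x" unfolding x_def using Q y by simp
  have xl: "x < 1" unfolding x_def by (rule x1) (use sl m1 in auto)
  have g: "((\<lambda>t::int. x powr real_of_int t) has_sum (x powr real_of_int b / (1 - x))) {b..}"
    by (rule has_sum_geom_int[OF x0 xl])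
  have ih: "((\<lambda>ts. c * wt Q y e ms ts) has_sum (c * Gc Q y e (int m + 1) ms)) {ts. V (int m + 1) ms ts}"
    using has_sum_cmult_right[OF Cons.IH] Cons.prems by simp
  have prod: "((\<lambda>(t,ts). x powr real_of_int t * (c * wt Q y e ms ts)) has_sum
      (x powr real_of_int b / (1 - x) * (c * Gc Q y e (int m + 1) ms))) ({b..} \<times> {ts. V (int m + 1) ms ts})"
    by (rule has_sum_times_nonneg[OF g ih]) (auto simp: c_def wt_nonneg Q y less_imp_le)
  have set_eq: "{t. 1 \<le> m \<and> b \<le> t} = {b..}" using m1 by auto
  have "(wt Q y e (m#ms) has_sum (x powr real_of_int b / (1 - x) * (c * Gc Q y e (int m + 1) ms)))
        ((\<lambda>(t,ts). t#ts) ` ({b..} \<times> {ts. V (int m + 1) ms ts}))"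
  proof (subst has_sum_reindex)
    show "inj_on (\<lambda>(t,ts). t#ts) ({b..} \<times> {ts. V (int m + 1) ms ts})" by (auto simp: inj_on_def)
    show "(wt Q y e (m # ms) \<circ> (\<lambda>(t, ts). t # ts) has_sum x powr real_of_int b / (1 - x) * (c * Gc Q y e (int m + 1) ms))
          ({b..} \<times> {ts. V (int m + 1) ms ts})"
    proof (rule has_sum_cong[THEN iffD1, OF _ prod])
      fix p assume "p \<in> {b..} \<times> {ts. V (int m + 1) ms ts}"
      then obtain t ts where p: "p = (t, ts)" "b \<le> t" "V (int m + 1) ms ts" by auto
      have v: "V b (m#ms) (t#ts)" using p m1 by simp
      show "(case p of (t, ts) \<Rightarrow> x powr real_of_int t * (c * wt Q y e ms ts)) = (wt Q y e (m # ms) \<circ> (\<lambda>(t, ts). t # ts)) p"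
        using wt_cons[OF v Q y, of e] p unfolding x_def c_def by simp
    qed
  qed
  then show ?case unfolding Vset_cons set_eq by (simp add: x_def c_def Let_def algebra_simps)
qed

definition RFb :: "real \<Rightarrow> real \<Rightarrow> real \<Rightarrow> int \<Rightarrow> nat list \<Rightarrow> real" where
  "RFb y Q e b ms = (\<Prod>j\<in>{1..length ms}.
     (let R = length ms;
          x = y powr (e * real (R - j + 1)) * Q powr real (tailsum ms j);
          mj = real (ms ! (j - 1))
      in Q powr (mj * (mj - 1) / 2) * x powr (if j = 1 then real_of_int b else real (ms ! (j - 2)) + 1) / (1 - x)))"

lemma right_factor_RFb: "right_factor y Q ms = RFb y Q 1 1 ms"
  unfolding right_factor_def RFb_def
  by (rule prod.cong) (auto simp: seqv_def Let_def numeral_2_eq_2)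

lemma left_factor_RFb: "left_factor y Q ls = RFb y Q (-1) 0 ls"
  unfolding left_factor_def RFb_def
  by (rule prod.cong) (auto simp: seqv_def Let_def numeral_2_eq_2)

lemma tailsum_Suc: "1 \<le> j \<Longrightarrow> tailsum (m#ms) (Suc j) = tailsum ms j"
proof -
  assume j: "1 \<le> j"
  have "tailsum (m#ms) (Suc j) = (\<Sum>k\<in>{Suc j..Suc (length ms)}. (m#ms) ! (k - 1))"
    unfolding tailsum_def by simp
  also have "\<dots> = (\<Sum>k\<in>{j..length ms}. (m#ms) ! k)"
    by (subst sum.shift_bounds_cl_Suc_ivl) simp
  also have "\<dots> = (\<Sum>k\<in>{j..length ms}. ms ! (k - 1))"
    by (rule sum.cong) (use j in \<open>auto simp: nth_Cons'\<close>)
  finally show ?thesis unfolding tailsum_def .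
qed

lemma tailsum_1: "tailsum ms 1 = sum_list ms"
proof (induction ms)
  case Nil then show ?case by (simp add: tailsum_def)
next
  case (Cons m ms)
  have "tailsum (m#ms) 1 = (\<Sum>k\<in>{1..Suc (length ms)}. (m#ms) ! (k - 1))"
    unfolding tailsum_def by simp
  also have "\<dots> = m + (\<Sum>k\<in>{Suc 1..Suc (length ms)}. (m#ms) ! (k - 1))"
    by (subst sum.atLeast_Suc_atMost) auto
  also have "(\<Sum>k\<in>{Suc 1..Suc (length ms)}. (m#ms) ! (k - 1)) = tailsum (m#ms) (Suc 1)"
    unfolding tailsum_def by simp
  also have "\<dots> = tailsum ms 1" by (rule tailsum_Suc) simp
  finally show ?case using Cons by simp
qed

lemma RFb_Nil: "RFb y Q e b [] = 1"
  unfolding RFb_def by simp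

lemma RFb_Cons: "RFb y Q e b (m#ms) =
   (let x = y powr (e * real (1 + length ms)) * Q powr real (m + sum_list ms) in x powr real_of_int b / (1 - x))
   * Q powr (real m * (real m - 1) / 2) * RFb y Q e (int m + 1) ms"
proof -
  define g where "g = (\<lambda>j. let R = length (m#ms);
          x = y powr (e * real (R - j + 1)) * Q powr real (tailsum (m#ms) j);
          mj = real ((m#ms) ! (j - 1))
      in Q powr (mj * (mj - 1) / 2) * x powr (if j = 1 then real_of_int b else real ((m#ms) ! (j - 2)) + 1) / (1 - x))"
  have "RFb y Q e b (m#ms) = (\<Prod>j\<in>{1..Suc (length ms)}. g j)"
    unfolding RFb_def g_def by simp
  also have "\<dots> = g 1 * (\<Prod>j\<in>{Suc 1..Suc (length ms)}. g j)"
    by (subst prod.atLeast_Suc_atMost) auto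
  also have "(\<Prod>j\<in>{Suc 1..Suc (length ms)}. g j) = (\<Prod>j\<in>{1..length ms}. g (Suc j))"
    by (rule prod.shift_bounds_cl_Suc_ivl)
  also have "\<dots> = RFb y Q e (int m + 1) ms"
    unfolding RFb_def
  proof (rule prod.cong)
    fix j assume j: "j \<in> {1..length ms}"
    then have j1: "1 \<le> j" by simp
    have a: "Suc (length ms) - Suc j + 1 = length ms - j + 1" by simp
    have b: "(m#ms) ! (Suc j - 1) = ms ! (j - 1)" using j1 by (cases j) auto
    have c: "(if Suc j = 1 then real_of_int b else real ((m#ms) ! (Suc j - 2)) + 1)
           = (if j = 1 then real_of_int (int m + 1) else real (ms ! (j - 2)) + 1)"
      using j1 by (cases j; cases "j - 1") auto
    show "g (Suc j) = (let R = length ms; x = y powr (e * real (R - j + 1)) * Q powr real (tailsum ms j);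
          mj = real (ms ! (j - 1)) in Q powr (mj * (mj - 1) / 2) *
          x powr (if j = 1 then real_of_int (int m + 1) else real (ms ! (j - 2)) + 1) / (1 - x))"
      unfolding g_def Let_def using a b c tailsum_Suc[OF j1, of m ms] by simp
  qed simp
  also have "g 1 = (let x = y powr (e * real (1 + length ms)) * Q powr real (m + sum_list ms) in x powr real_of_int b / (1 - x))
   * Q powr (real m * (real m - 1) / 2)"
    unfolding g_def Let_def using tailsum_1[of "m#ms"] by simp
  finally show ?thesis by (simp add: mult.assoc)
qed

lemma Gc_RFb: "0 < y \<Longrightarrow> Gc Q y e b ms = y powr (e * (real (sum_list ms) - 2 * real (length ms)) / 2) * RFb y Q e b ms"
proof (induction ms arbitrary: b)
  case Nil then show ?case by (simp add: RFb_Nil)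
next
  case (Cons m ms)
  have "y powr (e * (real (sum_list (m#ms)) - 2 * real (length (m#ms))) / 2)
      = y powr (e * (real m - 2) / 2) * y powr (e * (real (sum_list ms) - 2 * real (length ms)) / 2)"
  proof -
    have "e * (real (sum_list (m#ms)) - 2 * real (length (m#ms))) / 2
        = e * (real m - 2) / 2 + e * (real (sum_list ms) - 2 * real (length ms)) / 2"
      by (simp add: field_simps)
    then show ?thesis by (simp only: powr_add)
  qed
  then show ?case using Cons by (simp add: RFb_Cons Let_def mult_ac)
qed

definition cfg :: "int set \<Rightarrow> int set \<Rightarrow> int \<Rightarrow> int" where
  "cfg A B = (\<lambda>i. if i \<le> 0 then (if i \<in> B then 1 else -1) else (if i \<in> A then -1 else 1))"

definition Aof :: "(int \<Rightarrow> int) \<Rightarrow> int set" where "Aof \<sigma> = {i. 1 \<le> i \<and> \<sigma> i = -1}"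
definition Bof :: "(int \<Rightarrow> int) \<Rightarrow> int set" where "Bof \<sigma> = {i. i \<le> 0 \<and> \<sigma> i = 1}"

definition AB :: "(int set \<times> int set) set" where
  "AB = {(A, B). finite A \<and> A \<subseteq> {1..} \<and> finite B \<and> B \<subseteq> {..0}}"

lemma cfg_in_B: assumes "finite A" "A \<subseteq> {1..}" "finite B" "B \<subseteq> {..0}"
  shows "cfg A B \<in> B_set"
proof -
  obtain a where a: "\<And>i. i \<in> B \<Longrightarrow> a < i" "a \<le> 0"
  proof
    fix i assume i: "i \<in> B"
    have "Min (insert 0 B) \<le> i" by (rule Min_le) (use assms(3) i in auto)
    then show "Min (insert 0 B) - 1 < i" by simp
  next
    show "Min (insert 0 B) - 1 \<le> 0" using assms(3) by (simp add: Min_le_iff)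
  qed
  obtain b where b: "\<And>i. i \<in> A \<Longrightarrow> i < b" "0 \<le> b"
  proof
    fix i assume i: "i \<in> A"
    have "i \<le> Max (insert 0 A)" by (rule Max_ge) (use assms(1) i in auto)
    then show "i < Max (insert 0 A) + 1" by simp
  next
    show "0 \<le> Max (insert 0 A) + 1" using assms(1) by (simp add: Max_ge_iff)
  qed
  have "\<forall>i::nat. cfg A B (a - int i) = -1 \<and> cfg A B (b + 1 + int i) = 1"
  proof
    fix i :: nat
    have "a - int i \<notin> B" using a(1)[of "a - int i"] by auto
    moreover have "b + 1 + int i \<notin> A" using b(1)[of "b + 1 + int i"] by auto
    ultimately show "cfg A B (a - int i) = -1 \<and> cfg A B (b + 1 + int i) = 1"
      unfolding cfg_def using a(2) b(2) by auto
  qed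
  moreover have "cfg A B \<in> spin_configs" unfolding spin_configs_def cfg_def by auto
  ultimately show ?thesis unfolding B_set_def by blast
qed

lemma B_set_decomp: assumes "\<sigma> \<in> B_set"
  shows "finite (Aof \<sigma>)" "finite (Bof \<sigma>)" "Aof \<sigma> \<subseteq> {1..}" "Bof \<sigma> \<subseteq> {..0}" "\<sigma> = cfg (Aof \<sigma>) (Bof \<sigma>)"
proof -
  from assms obtain a b where ab: "\<forall>i::nat. \<sigma> (a - int i) = -1 \<and> \<sigma> (b + int i) = 1"
    and sp: "\<forall>i. \<sigma> i = -1 \<or> \<sigma> i = 1"
    unfolding B_set_def spin_configs_def by auto
  have "Aof \<sigma> \<subseteq> {1..<b}"
  proof
    fix i assume i: "i \<in> Aof \<sigma>"
    have "i < b"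
    proof (rule ccontr)
      assume "\<not> i < b"
      then have "\<sigma> (b + int (nat (i - b))) = 1" using ab by blast
      then show False using i \<open>\<not> i < b\<close> unfolding Aof_def by simp
    qed
    then show "i \<in> {1..<b}" using i unfolding Aof_def by simp
  qed
  then show "finite (Aof \<sigma>)" using finite_subset by blast
  have "Bof \<sigma> \<subseteq> {a<..0}"
  proof
    fix i assume i: "i \<in> Bof \<sigma>"
    have "a < i"
    proof (rule ccontr)
      assume "\<not> a < i"
      then have "\<sigma> (a - int (nat (a - i))) = -1" using ab by blast
      then show False using i \<open>\<not> a < i\<close> unfolding Bof_def by simp
    qed
    then show "i \<in> {a<..0}" using i unfolding Bof_def by simp
  qed
  then show "finite (Bof \<sigma>)" using finite_subset by blast
  show "Aof \<sigma> \<subseteq> {1..}" "Bof \<sigma> \<subseteq> {..0}" unfolding Aof_def Bof_def by auto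
  show "\<sigma> = cfg (Aof \<sigma>) (Bof \<sigma>)"
  proof
    fix i show "\<sigma> i = cfg (Aof \<sigma>) (Bof \<sigma>) i"
      using sp[rule_format, of i] unfolding cfg_def Aof_def Bof_def by auto
  qed
qed

lemma Aof_cfg: "A \<subseteq> {1..} \<Longrightarrow> Aof (cfg A B) = A"
  unfolding Aof_def cfg_def by auto

lemma Bof_cfg: "B \<subseteq> {..0} \<Longrightarrow> Bof (cfg A B) = B"
  unfolding Bof_def cfg_def by auto

lemma Ncount_cfg: "A \<subseteq> {1..} \<Longrightarrow> B \<subseteq> {..0} \<Longrightarrow> Ncount (cfg A B) = int (card A) - int (card B)"
proof -
  assume "A \<subseteq> {1..}" "B \<subseteq> {..0}"
  then have "{i. i \<ge> 1 \<and> cfg A B i = -1} = A" "{i. i \<le> 0 \<and> cfg A B i = 1} = B"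
    unfolding cfg_def by auto
  then show ?thesis unfolding Ncount_def by simp
qed

lemma fc_cfg: "A \<subseteq> {1..} \<Longrightarrow> B \<subseteq> {..0} \<Longrightarrow>
   fc c (cfg A B) = 2 * (\<Sum>i\<in>A. (real_of_int i - c)) - 2 * (\<Sum>i\<in>B. (real_of_int i - c))"
proof -
  assume "A \<subseteq> {1..}" "B \<subseteq> {..0}"
  then have "{i. i \<ge> 1 \<and> cfg A B i = -1} = A" "{i. i \<le> 0 \<and> cfg A B i = 1} = B"
    unfolding cfg_def by auto
  then show ?thesis unfolding fc_def by simp
qed

lemma D_sub_le: "X \<subseteq> {..c} \<Longrightarrow> D X \<subseteq> {..c}"
  unfolding D_def by force

lemma walls_cfg: assumes "A \<subseteq> {1..}" "B \<subseteq> {..0}"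
  shows "{i. cfg A B i \<noteq> cfg A B (i+1)} = (D A - {0}) \<union> (D B - {0}) \<union> (if (0 \<in> B) = (1 \<in> A) then {0} else {})"
proof -
  have "i \<in> {i. cfg A B i \<noteq> cfg A B (i+1)} \<longleftrightarrow> i \<in> (D A - {0}) \<union> (D B - {0}) \<union> (if (0 \<in> B) = (1 \<in> A) then {0} else {})" for i
  proof (cases "i \<ge> 1")
    case True
    then have "i \<notin> B" "i + 1 \<notin> B" using assms by auto
    then show ?thesis using True unfolding cfg_def D_def by auto
  next
    case False
    show ?thesis
    proof (cases "i = 0")
      case True
      have "0 \<notin> A" using assms by auto
      then show ?thesis using True unfolding cfg_def D_def by auto
    next
      case False
      then have "i \<le> -1" using \<open>\<not> i \<ge> 1\<close> by simp
      then have "i \<notin> A" "i + 1 \<notin> A" using assms by auto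
      then show ?thesis using \<open>i \<le> -1\<close> unfolding cfg_def D_def by auto
    qed
  qed
  then show ?thesis by blast
qed

lemma D_finite: "finite X \<Longrightarrow> finite (D X)"
proof -
  assume f: "finite X"
  have "D X \<subseteq> X \<union> (\<lambda>i. i - 1) ` X"
    unfolding D_def by (auto simp: image_iff) (metis add_diff_cancel_right')
  then show ?thesis using f finite_subset by blast
qed

lemma walls_facts: assumes "A \<subseteq> {1..}" "B \<subseteq> {..0}" "finite A" "finite B"
  shows "H (\<lambda>i. real_of_int i) (cfg A B) = real_of_int ((\<Sum>w\<in>D A. w) + (\<Sum>w\<in>D B. w))"
    and "H1 (cfg A B) = real (card (D A - {0}) + card (D B - {0})) + (if (0 \<in> B) = (1 \<in> A) then 1 else 0)"
proof -
  have dA: "D A \<subseteq> {0..}" using D_sub[OF assms(1)] by simp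
  have dB: "D B \<subseteq> {..0}" using D_sub_le[OF assms(2)] .
  have fA: "finite (D A)" and fB: "finite (D B)" using D_finite assms(3,4) by auto
  define Z where "Z = (if (0 \<in> B) = (1 \<in> A) then {0::int} else {})"
  have W: "{i. cfg A B i \<noteq> cfg A B (i+1)} = (D A - {0}) \<union> (D B - {0}) \<union> Z"
    using walls_cfg[OF assms(1,2)] Z_def by simp
  have d1: "(D A - {0}) \<inter> (D B - {0}) = {}"
  proof (rule equals0I)
    fix x assume "x \<in> (D A - {0}) \<inter> (D B - {0})"
    then have "x \<in> D A" "x \<in> D B" "x \<noteq> 0" by auto
    then have "0 \<le> x" "x \<le> 0" using dA dB by auto
    then show False using \<open>x \<noteq> 0\<close> by simp
  qed
  have d2: "((D A - {0}) \<union> (D B - {0})) \<inter> Z = {}" unfolding Z_def by auto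
  have fZ: "finite Z" unfolding Z_def by simp
  have s0: "(\<Sum>w\<in>X - {0}. g w) = (\<Sum>w\<in>X. g w)" if "finite X" "g 0 = 0" for X and g :: "int \<Rightarrow> real"
    using that by (metis sum.remove sum_diff1 add_0 diff_zero)
  have "H (\<lambda>i. real_of_int i) (cfg A B) = (\<Sum>w\<in>D A - {0}. real_of_int w) + (\<Sum>w\<in>D B - {0}. real_of_int w) + (\<Sum>w\<in>Z. real_of_int w)"
    unfolding H_def W using d1 d2 fA fB fZ by (simp add: sum.union_disjoint)
  also have "(\<Sum>w\<in>Z. real_of_int w) = 0" unfolding Z_def by simp
  finally show "H (\<lambda>i. real_of_int i) (cfg A B) = real_of_int ((\<Sum>w\<in>D A. w) + (\<Sum>w\<in>D B. w))"
    using s0[OF fA, of real_of_int] s0[OF fB, of real_of_int] by simp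
  have "H1 (cfg A B) = real (card ((D A - {0}) \<union> (D B - {0}) \<union> Z))"
    unfolding H1_def H_def W by simp
  also have "\<dots> = real (card (D A - {0}) + card (D B - {0}) + card Z)"
    using d1 d2 fA fB fZ by (simp add: card_Un_disjoint)
  finally show "H1 (cfg A B) = real (card (D A - {0}) + card (D B - {0})) + (if (0 \<in> B) = (1 \<in> A) then 1 else 0)"
    unfolding Z_def by simp
qed

lemma D_uminus: "D (uminus ` X) = (\<lambda>v. - v - 1) ` D X"
proof -
  have m: "(x \<in> uminus ` S) = (- x \<in> S)" for x :: int and S by (auto simp: image_iff) (metis minus_minus)
  have "w \<in> D (uminus ` X) \<longleftrightarrow> w \<in> (\<lambda>v. - v - 1) ` D X" for w
  proof -
    have "w \<in> D (uminus ` X) \<longleftrightarrow> - w - 1 \<in> D X" unfolding D_def m by auto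
    also have "\<dots> \<longleftrightarrow> w \<in> (\<lambda>v. - v - 1) ` D X" by (auto simp: image_iff) (metis add.inverse_inverse diff_add_cancel minus_diff_eq uminus_add_conv_diff)
    finally show ?thesis .
  qed
  then show ?thesis by blast
qed

definition fam :: "real \<Rightarrow> real \<Rightarrow> real \<Rightarrow> int \<Rightarrow> (int \<Rightarrow> int) \<Rightarrow> real" where
  "fam \<beta> q c n \<sigma> = weight (\<lambda>i. real_of_int i) \<beta> q c \<sigma> * ((if Ncount \<sigma> = 0 then 1 else 0) * exp (- real_of_int n * \<beta> * H1 \<sigma>))"

definition Phi :: "nat list \<Rightarrow> nat list \<Rightarrow> int list \<Rightarrow> int list \<Rightarrow> int \<Rightarrow> int" where
  "Phi ls ms us ts = cfg (P ms ts) (uminus ` P ls us)"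

lemma hd_facts1: "V 1 ms ts \<Longrightarrow> ms \<noteq> [] \<Longrightarrow> (1 \<in> P ms ts) = (\<not> 2 \<le> hd ts)"
proof -
  assume v: "V 1 ms ts" "ms \<noteq> []"
  then obtain m ms' t ts' where e: "ms = m # ms'" "ts = t # ts'" by (cases ms; cases ts) auto
  note f = P_cons_facts[OF v(1)[unfolded e]]
  have t1: "1 \<le> t" using v(1) e by simp
  show ?thesis
  proof
    assume "1 \<in> P ms ts" then have "t \<le> 1" using f(2) e by simp
    then show "\<not> 2 \<le> hd ts" using e by simp
  next
    assume "\<not> 2 \<le> hd ts" then have "t = 1" using e t1 by simp
    then show "1 \<in> P ms ts" using f(1) e by simp
  qed
qed

lemma hd_facts0: "V 0 ls us \<Longrightarrow> ls \<noteq> [] \<Longrightarrow> (0 \<in> P ls us) = (\<not> 1 \<le> hd us)"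
proof -
  assume v: "V 0 ls us" "ls \<noteq> []"
  then obtain m ms' t ts' where e: "ls = m # ms'" "us = t # ts'" by (cases ls; cases us) auto
  note f = P_cons_facts[OF v(1)[unfolded e]]
  have t1: "0 \<le> t" using v(1) e by simp
  show ?thesis
  proof
    assume "0 \<in> P ls us" then have "t \<le> 0" using f(2) e by simp
    then show "\<not> 1 \<le> hd us" using e by simp
  next
    assume "\<not> 1 \<le> hd us" then have "t = 0" using e t1 by simp
    then show "0 \<in> P ls us" using f(1) e by simp
  qed
qed

lemma q_powr_2: "0 < (q::real) \<Longrightarrow> q powr (2 * z) = (q^2) powr z"
proof -
  assume q: "0 < q"
  have "q^2 = q powr 2" using powr_realpow[OF q, of 2] by simp
  then show ?thesis by (simp add: powr_powr)
qed

lemma y_powr_exp: "exp (- 2 * (\<beta>::real)) powr z = exp (- \<beta> * (2 * z))"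
  by (simp add: powr_def)

lemma fam_Phi:
  assumes q: "0 < q" and Qd: "Q = q^2" and yd: "y = exp (-2 * \<beta>)"
    and tup: "(ls, ms) \<in> tuples L R" and L1: "1 \<le> L" and R1: "1 \<le> R"
    and vu: "V 0 ls us" and vt: "V 1 ms ts"
  shows "fam \<beta> q c n (Phi ls ms us ts) = wt Q y 1 ms ts * wt Q y (-1) ls us * y powr (- real L)
     * y powr (real_of_int n * (if 2 \<le> hd ts \<and> 1 \<le> hd us then 2 * real R + 2 * real L + 1 else 2 * real R + 2 * real L - 1) / 2)"
proof -
  define A where "A = P ms ts"
  define B' where "B' = P ls us"
  define B where "B = uminus ` B'"
  have lens: "length ls = L" "length ms = R" "sum_list ms = sum_list ls" using tup unfolding tuples_def by auto
  have ne: "ls \<noteq> []" "ms \<noteq> []" using lens L1 R1 by auto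
  have Asub: "A \<subseteq> {1..}" using P_ge[OF vt] A_def by simp
  have B'sub: "B' \<subseteq> {0..}" using P_ge[OF vu] B'_def by simp
  have Bsub: "B \<subseteq> {..0}" using B'sub B_def by auto
  have fA: "finite A" and fB': "finite B'" and fB: "finite B" using P_finite A_def B'_def B_def by auto
  have injm: "inj_on uminus B'" by (simp add: inj_on_def)
  have cA: "card A = sum_list ms" using P_card[OF vt] A_def by simp
  have cB: "card B = sum_list ls" using P_card[OF vu] B'_def B_def card_image[OF injm] by simp
  have N: "Ncount (cfg A B) = 0" using Ncount_cfg[OF Asub Bsub] cA cB lens by simp
  have sumB: "(\<Sum>i\<in>B. real_of_int i - c) = - (\<Sum>i\<in>B'. real_of_int i) - c * real (card B')"
  proof -
    have "(\<Sum>i\<in>B. real_of_int i - c) = (\<Sum>i\<in>B'. real_of_int (- i) - c)"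
      unfolding B_def by (subst sum.reindex[OF injm]) (simp add: o_def)
    also have "\<dots> = - (\<Sum>i\<in>B'. real_of_int i) - c * real (card B')" by (simp add: sum_subtractf sum_negf)
    finally show ?thesis .
  qed
  have cB': "card B' = card A" using cA cB lens B_def card_image[OF injm] by simp
  have fc: "fc c (cfg A B) = 2 * (real_of_int (\<Sum>i\<in>A. i) + real_of_int (\<Sum>i\<in>B'. i))"
    using fc_cfg[OF Asub Bsub, of c] sumB cB' by (simp add: sum_subtractf algebra_simps)
  have qf: "q powr fc c (cfg A B) = Q powr real_of_int (\<Sum>i\<in>A. i) * Q powr real_of_int (\<Sum>i\<in>B'. i)"
    unfolding fc q_powr_2[OF q] Qd by (simp add: powr_add)
  note wf = walls_facts[OF Asub Bsub fA fB]
  have dB: "D B = (\<lambda>v. - v - 1) ` D B'" unfolding B_def by (rule D_uminus)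
  have injd: "inj_on (\<lambda>v::int. - v - 1) (D B')" by (simp add: inj_on_def)
  have cdB': "card (D B') = 2 * L" using P_Dcard[OF vu] B'_def lens by simp
  have cdA: "card (D A) = 2 * R" using P_Dcard[OF vt] A_def lens by simp
  have sdB: "(\<Sum>w\<in>D B. w) = - (\<Sum>w\<in>D B'. w) - 2 * int L"
  proof -
    have "(\<Sum>w\<in>D B. w) = (\<Sum>v\<in>D B'. - v - 1)" unfolding dB by (subst sum.reindex[OF injd]) (simp add: o_def)
    also have "\<dots> = - (\<Sum>w\<in>D B'. w) - int (card (D B'))" by (simp add: sum_subtractf sum_negf)
    finally show ?thesis using cdB' by simp
  qed
  have Hv: "H (\<lambda>i. real_of_int i) (cfg A B) = real_of_int (\<Sum>w\<in>D A. w) - real_of_int (\<Sum>w\<in>D B'. w) - 2 * real L"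
    using wf(1) sdB by simp
  have a_iff: "(0 \<in> D A) = (1 \<in> A)" using Asub unfolding D_def by auto
  have b_iff: "(0 \<in> D B) = (0 \<in> B')"
  proof -
    have "0 \<in> D B \<longleftrightarrow> -1 \<in> D B'" unfolding dB by (auto simp: image_iff)
    also have "\<dots> \<longleftrightarrow> 0 \<in> B'" using B'sub unfolding D_def by auto
    finally show ?thesis .
  qed
  have zB: "(0 \<in> B) = (0 \<in> B')" unfolding B_def by (auto simp: image_iff)
  have fdA: "finite (D A)" and fdB: "finite (D B)" using D_finite fA fB by auto
  have cdB: "card (D B) = 2 * L" unfolding dB using card_image[OF injd] cdB' by simp
  have cA0: "real (card (D A - {0})) = 2 * real R - (if 1 \<in> A then 1 else 0)"
    using a_iff cdA fdA R1 by (cases "0 \<in> D A") (auto simp: card_Diff_singleton of_nat_diff)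
  have cB0: "real (card (D B - {0})) = 2 * real L - (if 0 \<in> B' then 1 else 0)"
    using b_iff cdB fdB L1 by (cases "0 \<in> D B") (auto simp: card_Diff_singleton of_nat_diff)
  have h1A: "(1 \<in> A) = (\<not> 2 \<le> hd ts)" using hd_facts1[OF vt ne(2)] A_def by simp
  have h0B: "(0 \<in> B') = (\<not> 1 \<le> hd us)" using hd_facts0[OF vu ne(1)] B'_def by simp
  have H1v: "H1 (cfg A B) = (if 2 \<le> hd ts \<and> 1 \<le> hd us then 2 * real R + 2 * real L + 1 else 2 * real R + 2 * real L - 1)"
    unfolding wf(2) using cA0 cB0 zB h1A h0B by auto
  have "fam \<beta> q c n (cfg A B) = exp (- \<beta> * H (\<lambda>i. real_of_int i) (cfg A B)) * q powr fc c (cfg A B) * exp (- real_of_int n * \<beta> * H1 (cfg A B))"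
    unfolding fam_def weight_def using N by simp
  also have "exp (- \<beta> * H (\<lambda>i. real_of_int i) (cfg A B)) = y powr (1 * real_of_int (\<Sum>w\<in>D A. w) / 2) * y powr (-1 * real_of_int (\<Sum>w\<in>D B'. w) / 2) * y powr (- real L)"
    unfolding yd y_powr_exp Hv by (simp add: exp_add[symmetric] algebra_simps)
  also have "exp (- real_of_int n * \<beta> * H1 (cfg A B)) = y powr (real_of_int n * H1 (cfg A B) / 2)"
    unfolding yd y_powr_exp by (simp add: algebra_simps)
  finally show ?thesis unfolding Phi_def A_def[symmetric] B'_def[symmetric] B_def[symmetric] wt_def qf H1v
    by (simp add: A_def B'_def mult_ac)
qed

lemma V_mono: "V b ms ts \<Longrightarrow> b' \<le> b \<Longrightarrow> V b' ms ts"
  by (cases ms; cases ts) auto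

lemma Gc_succ: "0 < Q \<Longrightarrow> 0 < y \<Longrightarrow> Gc Q y e (b + 1) (m#ms) =
   (y powr (e * real (1 + length ms)) * Q powr real (m + sum_list ms)) * Gc Q y e b (m#ms)"
  by (simp add: Let_def powr_add)

lemma x1_pos: assumes "0 < Q" "Q < 1" "0 < y" "y \<le> 1"
  shows "\<And>k s. 1 \<le> k \<Longrightarrow> k \<le> s \<Longrightarrow> y powr (1 * real k) * Q powr real s < 1"
proof -
  fix k s :: nat assume ks: "1 \<le> k" "k \<le> s"
  have "y powr (1 * real k) \<le> 1" using assms by (simp add: powr_le1)
  moreover have "Q powr real s < 1" using assms ks by (simp add: powr_realpow power_less_one_iff)
  moreover have "0 \<le> Q powr real s" by simp
  ultimately show "y powr (1 * real k) * Q powr real s < 1"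
    by (smt (verit) mult_left_le_one_le mult_nonneg_nonneg powr_ge_zero)
qed

lemma x1_neg: assumes "0 < Q" "Q < y" "0 < y" "Q < 1"
  shows "\<And>k s. 1 \<le> k \<Longrightarrow> k \<le> s \<Longrightarrow> y powr (-1 * real k) * Q powr real s < 1"
proof -
  fix k s :: nat assume ks: "1 \<le> k" "k \<le> s"
  have "Q powr real s = Q powr real k * Q powr (real s - real k)" by (simp add: powr_add[symmetric])
  also have "\<dots> \<le> Q powr real k" using assms ks by (simp add: powr_le1 mult_left_le_one_le)
  finally have a: "Q powr real s \<le> Q powr real k" .
  have "y powr (-1 * real k) * Q powr real k = (Q / y) ^ k"
    using assms by (simp add: powr_minus powr_realpow divide_inverse power_mult_distrib power_inverse mult.commute)
  also have "\<dots> < 1" using assms ks by (subst power_less_one_iff) auto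
  finally have b: "y powr (-1 * real k) * Q powr real k < 1" .
  have "y powr (-1 * real k) * Q powr real s \<le> y powr (-1 * real k) * Q powr real k"
    using a by (intro mult_left_mono) auto
  then show "y powr (-1 * real k) * Q powr real s < 1" using b by linarith
qed

lemma block_has_sum:
  assumes q: "0 < q" "q < 1" and Qd: "Q = q^2" and yd: "y = exp (-2 * \<beta>)" and b0: "0 \<le> \<beta>"
    and Qy: "Q < y"
    and tup: "(ls, ms) \<in> tuples L R" and L1: "1 \<le> L" and R1: "1 \<le> R"
  shows "((\<lambda>(us,ts). fam \<beta> q c n (Phi ls ms us ts)) has_sum
          (y powr real_of_int (n * int L + (n - 1) * int R) * inner_term y Q n ls ms))
         ({us. V 0 ls us} \<times> {ts. V 1 ms ts})"
proof -
  have Q0: "0 < Q" and Q1: "Q < 1" using q Qd by (auto simp: power_less_one_iff abs_square_less_1)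
  have y0: "0 < y" and y1: "y \<le> 1" using yd b0 by auto
  have lens: "length ls = L" "length ms = R" "sum_list ms = sum_list ls"
    and posl: "\<forall>x\<in>set ls. 1 \<le> x" and posm: "\<forall>x\<in>set ms. 1 \<le> x"
    using tup unfolding tuples_def by auto
  define k where "k = sum_list ms"
  obtain m ms' where ms: "ms = m # ms'" using lens R1 by (cases ms) auto
  obtain l ls' where ls: "ls = l # ls'" using lens L1 by (cases ls) auto
  note xp = x1_pos[OF Q0 Q1 y0 y1] and xn = x1_neg[OF Q0 Qy y0 Q1]
  define GR1 where "GR1 = Gc Q y 1 1 ms"
  define GR2 where "GR2 = Gc Q y 1 2 ms"
  define GL0 where "GL0 = Gc Q y (-1) 0 ls"
  define GL1 where "GL1 = Gc Q y (-1) 1 ls"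
  have hR1: "(wt Q y 1 ms has_sum GR1) {ts. V 1 ms ts}" unfolding GR1_def by (rule Gc_has_sum[OF Q0 y0 xp posm])
  have hR2: "(wt Q y 1 ms has_sum GR2) {ts. V 2 ms ts}" unfolding GR2_def by (rule Gc_has_sum[OF Q0 y0 xp posm])
  have hL0: "(wt Q y (-1) ls has_sum GL0) {us. V 0 ls us}" unfolding GL0_def by (rule Gc_has_sum[OF Q0 y0 xn posl])
  have hL1: "(wt Q y (-1) ls has_sum GL1) {us. V 1 ls us}" unfolding GL1_def by (rule Gc_has_sum[OF Q0 y0 xn posl])
  define g where "g = (\<lambda>(us,ts). wt Q y (-1) ls us * wt Q y 1 ms ts)"
  have S1: "(g has_sum (GL0 * GR1)) ({us. V 0 ls us} \<times> {ts. V 1 ms ts})"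
    unfolding g_def by (rule has_sum_times_nonneg[OF hL0 hR1]) (auto simp: wt_nonneg Q0 y0 less_imp_le)
  have S2': "(g has_sum (GL1 * GR2)) ({us. V 1 ls us} \<times> {ts. V 2 ms ts})"
    unfolding g_def by (rule has_sum_times_nonneg[OF hL1 hR2]) (auto simp: wt_nonneg Q0 y0 less_imp_le)
  define cond where "cond = (\<lambda>(us::int list,ts::int list). 2 \<le> hd ts \<and> 1 \<le> hd us)"
  have S2: "((\<lambda>p. if cond p then g p else 0) has_sum (GL1 * GR2)) ({us. V 0 ls us} \<times> {ts. V 1 ms ts})"
  proof -
    have "((\<lambda>p. if cond p then g p else 0) has_sum (GL1 * GR2)) ({us. V 0 ls us} \<times> {ts. V 1 ms ts})
       \<longleftrightarrow> (g has_sum (GL1 * GR2)) ({us. V 1 ls us} \<times> {ts. V 2 ms ts})"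
    proof (rule has_sum_cong_neutral)
      fix p assume p: "p \<in> {us. V 1 ls us} \<times> {ts. V 2 ms ts} - {us. V 0 ls us} \<times> {ts. V 1 ms ts}"
      then show "g p = 0" using V_mono by fastforce
    next
      fix p assume p: "p \<in> {us. V 0 ls us} \<times> {ts. V 1 ms ts} - {us. V 1 ls us} \<times> {ts. V 2 ms ts}"
      then obtain us ts where pp: "p = (us, ts)" "V 0 ls us" "V 1 ms ts" "\<not> (V 1 ls us \<and> V 2 ms ts)" by auto
      have "\<not> cond p"
      proof
        assume "cond p"
        then have "2 \<le> hd ts" "1 \<le> hd us" using pp unfolding cond_def by auto
        then have "V 1 ls us" "V 2 ms ts" using pp ls ms by (cases us; cases ts; auto)+
        then show False using pp by simp
      qed
      then show "(if cond p then g p else 0) = 0" by simp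
    next
      fix p assume p: "p \<in> {us. V 0 ls us} \<times> {ts. V 1 ms ts} \<inter> {us. V 1 ls us} \<times> {ts. V 2 ms ts}"
      then obtain us ts where pp: "p = (us, ts)" "V 1 ls us" "V 2 ms ts" by auto
      then have "cond p" unfolding cond_def using ls ms by (cases us; cases ts; auto)
      then show "(if cond p then g p else 0) = g p" by simp
    qed
    then show ?thesis using S2' by simp
  qed
  define a where "a = y powr (real_of_int n * (2 * real R + 2 * real L - 1) / 2)"
  define b where "b = y powr (real_of_int n * (2 * real R + 2 * real L + 1) / 2)"
  have S: "((\<lambda>p. y powr (- real L) * (a * g p + (b - a) * (if cond p then g p else 0))) has_sum
        (y powr (- real L) * (a * (GL0 * GR1) + (b - a) * (GL1 * GR2)))) ({us. V 0 ls us} \<times> {ts. V 1 ms ts})"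
    by (intro has_sum_cmult_right has_sum_add S1 S2)
  have famv: "(\<lambda>(us,ts). fam \<beta> q c n (Phi ls ms us ts)) p = y powr (- real L) * (a * g p + (b - a) * (if cond p then g p else 0))"
    if pin: "p \<in> {us. V 0 ls us} \<times> {ts. V 1 ms ts}" for p
  proof -
    obtain us ts where pp: "p = (us, ts)" "V 0 ls us" "V 1 ms ts" using pin by (cases p) auto
    show ?thesis using fam_Phi[OF q(1) Qd yd tup L1 R1 pp(2,3), of c n] pp(1)
      unfolding g_def cond_def a_def b_def by (auto simp: algebra_simps)
  qed
  have xR: "GR2 = (y powr real R * Q powr real k) * GR1"
  proof -
    have gs: "Gc Q y 1 (1 + 1) (m#ms') = (y powr (1 * real (1 + length ms')) * Q powr real (m + sum_list ms')) * Gc Q y 1 1 (m#ms')"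
      by (rule Gc_succ[OF Q0 y0])
    have g2: "Gc Q y 1 2 ms = (y powr (1 * real (1 + length ms')) * Q powr real (m + sum_list ms')) * Gc Q y 1 1 ms"
      using gs ms by (simp only: one_add_one)
    have r1: "1 * real (1 + length ms') = real R" using lens ms by simp
    have r2: "real (m + sum_list ms') = real k" using k_def ms by simp
    show ?thesis unfolding GR2_def GR1_def g2 r1 r2 ..
  qed
  have xL: "GL1 = (y powr (- real L) * Q powr real k) * GL0"
  proof -
    have gs: "Gc Q y (-1) (0 + 1) (l#ls') = (y powr (-1 * real (1 + length ls')) * Q powr real (l + sum_list ls')) * Gc Q y (-1) 0 (l#ls')"
      by (rule Gc_succ[OF Q0 y0])
    have g2: "Gc Q y (-1) 1 ls = (y powr (-1 * real (1 + length ls')) * Q powr real (l + sum_list ls')) * Gc Q y (-1) 0 ls"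
      using gs ls by (simp only: add_0)
    have r1: "-1 * real (1 + length ls') = - real L" using lens ls by simp
    have r2: "real (l + sum_list ls') = real k" using k_def ls lens by simp
    show ?thesis unfolding GL1_def GL0_def g2 r1 r2 ..
  qed
  have cR: "GR1 = y powr ((real k - 2 * real R) / 2) * right_factor y Q ms"
    unfolding GR1_def Gc_RFb[OF y0] right_factor_RFb using k_def lens(2) by simp
  have cL: "GL0 = y powr (- (real k - 2 * real L) / 2) * left_factor y Q ls"
    unfolding GL0_def Gc_RFb[OF y0] left_factor_RFb using k_def lens(1) lens(3) by simp
  define lf where "lf = left_factor y Q ls"
  define rf where "rf = right_factor y Q ms"
  define Z where "Z = y powr (real R - real L) * Q powr real k * Q powr real k"
  have e1: "y powr (- real L) * y powr (- (real k - 2 * real L) / 2) * y powr ((real k - 2 * real R) / 2) = y powr (- real R)"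
    by (simp add: powr_add[symmetric] field_simps)
  have e2: "a = y powr (real_of_int n * (real R + real L)) * y powr (- real_of_int n / 2)"
    unfolding a_def by (simp add: powr_add[symmetric] field_simps)
  have e3: "b = y powr (real_of_int n * (real R + real L)) * y powr (real_of_int n / 2)"
    unfolding b_def by (simp add: powr_add[symmetric] field_simps)
  have e4: "(y powr real R * Q powr real k) * (y powr (- real L) * Q powr real k) = Z"
    unfolding Z_def by (simp add: powr_add[symmetric] mult_ac)
  have e5: "y powr (- real R) * y powr (real_of_int n * (real R + real L)) = y powr real_of_int (n * int L + (n - 1) * int R)"
    by (simp add: powr_add[symmetric] algebra_simps)
  have "y powr (- real L) * (a * (GL0 * GR1) + (b - a) * (GL1 * GR2))
      = (y powr (- real L) * y powr (- (real k - 2 * real L) / 2) * y powr ((real k - 2 * real R) / 2)) * lf * rf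
        * (a + (b - a) * ((y powr real R * Q powr real k) * (y powr (- real L) * Q powr real k)))"
    unfolding xR xL cR cL lf_def rf_def by (simp add: algebra_simps)
  also have "\<dots> = y powr (- real R) * lf * rf * (a + (b - a) * Z)" unfolding e1 e4 ..
  also have "\<dots> = (y powr (- real R) * y powr (real_of_int n * (real R + real L))) * lf * rf *
       (y powr (- real_of_int n / 2) + (y powr (real_of_int n / 2) - y powr (- real_of_int n / 2)) * Z)"
    unfolding e2 e3 by (simp add: algebra_simps)
  also have "\<dots> = y powr real_of_int (n * int L + (n - 1) * int R) * inner_term y Q n ls ms"
    unfolding e5 inner_term_def lf_def rf_def Z_def k_def using lens by (simp add: mult_ac)
  finally have fin: "y powr (- real L) * (a * (GL0 * GR1) + (b - a) * (GL1 * GR2))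
      = y powr real_of_int (n * int L + (n - 1) * int R) * inner_term y Q n ls ms" .
  show ?thesis
    using S unfolding fin by (rule has_sum_cong[THEN iffD2, rotated]) (use famv in auto)
qed

lemma fin_subsets_summable:
  fixes r :: "'a \<Rightarrow> real"
  assumes nn: "\<And>i. i \<in> S \<Longrightarrow> 0 \<le> r i" and sm: "r summable_on S"
  shows "(\<lambda>A. \<Prod>i\<in>A. r i) summable_on {A. A \<subseteq> S \<and> finite A}"
proof (rule nonneg_bdd_above_summable_on)
  show "\<And>A. A \<in> {A. A \<subseteq> S \<and> finite A} \<Longrightarrow> 0 \<le> (\<Prod>i\<in>A. r i)"
    using nn by (auto intro: prod_nonneg)
  show "bdd_above (sum (\<lambda>A. \<Prod>i\<in>A. r i) ` {F. F \<subseteq> {A. A \<subseteq> S \<and> finite A} \<and> finite F})"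
  proof (rule bdd_aboveI2)
    fix F assume F: "F \<in> {F. F \<subseteq> {A. A \<subseteq> S \<and> finite A} \<and> finite F}"
    define U where "U = \<Union>F"
    have fU: "finite U" using F unfolding U_def by auto
    have US: "U \<subseteq> S" using F unfolding U_def by auto
    have "(\<Sum>A\<in>F. \<Prod>i\<in>A. r i) \<le> (\<Sum>A\<in>Pow U. \<Prod>i\<in>A. r i)"
    proof (rule sum_mono2)
      show "finite (Pow U)" using fU by simp
      show "F \<subseteq> Pow U" unfolding U_def by auto
      show "\<And>b. b \<in> Pow U - F \<Longrightarrow> 0 \<le> (\<Prod>i\<in>b. r i)" using nn US by (auto intro: prod_nonneg)
    qed
    also have "\<dots> = (\<Prod>i\<in>U. r i + 1)"
      using prod_add[OF fU, of r "\<lambda>_. 1"] by simp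
    also have "\<dots> \<le> (\<Prod>i\<in>U. exp (r i))"
    proof (rule prod_mono)
      fix i assume "i \<in> U"
      have "r i + 1 \<le> exp (r i)" using exp_ge_add_one_self[of "r i"] by linarith
      then show "0 \<le> r i + 1 \<and> r i + 1 \<le> exp (r i)" using nn US \<open>i \<in> U\<close> by auto
    qed
    also have "\<dots> = exp (\<Sum>i\<in>U. r i)" using exp_sum[OF fU, of r] by simp
    also have "\<dots> \<le> exp (infsum r S)"
      using finite_sum_le_infsum[OF sm fU US] nn by simp
    finally show "(\<Sum>A\<in>F. \<Prod>i\<in>A. r i) \<le> exp (infsum r S)" .
  qed
qed

lemma summable_times_nonneg:
  fixes f g :: "_ \<Rightarrow> real"
  assumes "f summable_on A" "g summable_on B" "\<And>x. x \<in> A \<Longrightarrow> f x \<ge> 0" "\<And>y. y \<in> B \<Longrightarrow> g y \<ge> 0"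
  shows "(\<lambda>(x,y). f x * g y) summable_on (A \<times> B)"
  using has_sum_times_nonneg[OF has_sum_infsum[OF assms(1)] has_sum_infsum[OF assms(2)] assms(3,4)]
  by (rule has_sum_imp_summable)

lemma card_D_le: "finite X \<Longrightarrow> card (D X) \<le> 2 * card X"
proof -
  assume f: "finite X"
  have "D X \<subseteq> X \<union> (\<lambda>i. i - 1) ` X"
    unfolding D_def by (auto simp: image_iff) (metis add_diff_cancel_right')
  then have "card (D X) \<le> card (X \<union> (\<lambda>i. i - 1) ` X)" using f by (intro card_mono) auto
  also have "\<dots> \<le> card X + card ((\<lambda>i. i - 1) ` X)" by (rule card_Un_le)
  also have "\<dots> \<le> card X + card X" using card_image_le[OF f] by simp
  finally show ?thesis by simp
qed

lemma DB_bound: assumes "finite B" "B \<subseteq> {..0}"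
  shows "- (\<Sum>w\<in>D B. w) \<le> (\<Sum>i\<in>B. 2 * (1 - i))"
proof -
  have sub: "D B \<subseteq> B \<union> (\<lambda>i. i - 1) ` B"
    unfolding D_def by (auto simp: image_iff) (metis add_diff_cancel_right')
  have le0: "D B \<subseteq> {..0}" using D_sub_le[OF assms(2)] .
  have f1: "finite (B \<union> (\<lambda>i. i - 1) ` B)" using assms by simp
  have "- (\<Sum>w\<in>D B. w) = (\<Sum>w\<in>D B. - w)" by (simp add: sum_negf)
  also have "\<dots> \<le> (\<Sum>w\<in>B \<union> (\<lambda>i. i - 1) ` B. - w)"
    by (rule sum_mono2[OF f1 sub]) (use assms(2) in auto)
  also have "\<dots> \<le> (\<Sum>w\<in>B. - w) + (\<Sum>w\<in>(\<lambda>i. i - 1) ` B. - w)"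
  proof -
    have "(\<Sum>w\<in>B \<union> (\<lambda>i. i - 1) ` B. - w) + (\<Sum>w\<in>B \<inter> (\<lambda>i. i - 1) ` B. - w) = (\<Sum>w\<in>B. - w) + (\<Sum>w\<in>(\<lambda>i. i - 1) ` B. - w)"
      using assms(1) by (intro sum.union_inter) auto
    moreover have "0 \<le> (\<Sum>w\<in>B \<inter> (\<lambda>i. i - 1) ` B. - w)" using assms(2) by (intro sum_nonneg) auto
    ultimately show ?thesis by linarith
  qed
  also have "(\<Sum>w\<in>(\<lambda>i. i - 1) ` B. - w) = (\<Sum>i\<in>B. 1 - i)"
    by (subst sum.reindex) (auto simp: inj_on_def)
  also have "(\<Sum>w\<in>B. - w) + (\<Sum>i\<in>B. 1 - i) \<le> (\<Sum>i\<in>B. 2 * (1 - i))"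
    by (simp add: sum.distrib[symmetric] sum_mono)
  finally show ?thesis .
qed

lemma weight_bound:
  assumes AB: "finite A" "A \<subseteq> {1..}" "finite B" "B \<subseteq> {..0}"
    and q: "0 < q" and Qd: "Q = q^2" and b0: "0 \<le> \<beta>" and k0: "0 \<le> \<kappa>"
  shows "weight (\<lambda>i. real_of_int i) \<beta> q c (cfg A B) * exp (\<kappa> * H1 (cfg A B))
     \<le> exp \<kappa> * (\<Prod>i\<in>A. exp (2 * \<kappa>) * Q powr (real_of_int i - c))
              * (\<Prod>i\<in>B. exp (2 * \<kappa>) * Q powr (c - real_of_int i) * exp (2 * \<beta> * (1 - real_of_int i)))"
proof -
  note wf = walls_facts[OF AB(2,4,1,3)]
  have dA: "D A \<subseteq> {0..}" using D_sub[OF AB(2)] by simp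
  have fdA: "finite (D A)" "finite (D B)" using D_finite AB by auto
  have sA: "0 \<le> (\<Sum>w\<in>D A. w)" using dA by (intro sum_nonneg) auto
  have sB: "- (\<Sum>w\<in>D B. w) \<le> (\<Sum>i\<in>B. 2 * (1 - i))" by (rule DB_bound[OF AB(3,4)])
  have Hb: "- \<beta> * H (\<lambda>i. real_of_int i) (cfg A B) \<le> \<beta> * (\<Sum>i\<in>B. 2 * (1 - real_of_int i))"
  proof -
    have "- H (\<lambda>i. real_of_int i) (cfg A B) \<le> real_of_int (\<Sum>i\<in>B. 2 * (1 - i))"
      unfolding wf(1) using sA sB by linarith
    then have "- H (\<lambda>i. real_of_int i) (cfg A B) \<le> (\<Sum>i\<in>B. 2 * (1 - real_of_int i))" by simp
    then show ?thesis using b0 by (metis minus_mult_commute mult_left_mono)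
  qed
  have h1: "H1 (cfg A B) \<le> 2 * real (card A) + 2 * real (card B) + 1"
  proof -
    have "card (D A - {0}) \<le> 2 * card A" using card_D_le[OF AB(1)] by (meson card_Diff1_le fdA(1) order_trans)
    moreover have "card (D B - {0}) \<le> 2 * card B" using card_D_le[OF AB(3)] by (meson card_Diff1_le fdA(2) order_trans)
    ultimately show ?thesis unfolding wf(2) by auto
  qed
  have fcv: "fc c (cfg A B) = 2 * ((\<Sum>i\<in>A. real_of_int i - c) + (\<Sum>i\<in>B. c - real_of_int i))"
    using fc_cfg[OF AB(2,4)] by (simp add: sum_subtractf algebra_simps)
  have qv: "q powr fc c (cfg A B) = (\<Prod>i\<in>A. Q powr (real_of_int i - c)) * (\<Prod>i\<in>B. Q powr (c - real_of_int i))"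
    unfolding fcv q_powr_2[OF q] Qd[symmetric] using q Qd by (simp add: powr_add powr_sum)
  have "weight (\<lambda>i. real_of_int i) \<beta> q c (cfg A B) * exp (\<kappa> * H1 (cfg A B))
      = exp (- \<beta> * H (\<lambda>i. real_of_int i) (cfg A B)) * q powr fc c (cfg A B) * exp (\<kappa> * H1 (cfg A B))"
    unfolding weight_def by simp
  also have "\<dots> \<le> exp (\<beta> * (\<Sum>i\<in>B. 2 * (1 - real_of_int i))) * q powr fc c (cfg A B) * exp (\<kappa> * (2 * real (card A) + 2 * real (card B) + 1))"
    using Hb h1 k0 by (intro mult_mono) (auto intro: mult_left_mono)
  also have "\<dots> = exp \<kappa> * (\<Prod>i\<in>A. exp (2 * \<kappa>) * Q powr (real_of_int i - c))
              * (\<Prod>i\<in>B. exp (2 * \<kappa>) * Q powr (c - real_of_int i) * exp (2 * \<beta> * (1 - real_of_int i)))"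
  proof -
    have e1: "exp (\<beta> * (\<Sum>i\<in>B. 2 * (1 - real_of_int i))) = (\<Prod>i\<in>B. exp (2 * \<beta> * (1 - real_of_int i)))"
      by (simp add: sum_distrib_left exp_sum AB(3) algebra_simps)
    have e2: "exp (\<kappa> * (2 * real (card A) + 2 * real (card B) + 1)) = exp \<kappa> * (\<Prod>i\<in>A. exp (2 * \<kappa>)) * (\<Prod>i\<in>B. exp (2 * \<kappa>))"
      by (simp add: exp_add[symmetric] exp_of_nat_mult[symmetric] algebra_simps)
    show ?thesis unfolding e1 e2 qv by (simp add: prod.distrib mult_ac)
  qed
  finally show ?thesis .
qed

lemma exp_int_powr: "exp (a * real_of_int i) = (exp a) powr real_of_int i"
  by (simp add: powr_def mult.commute)

lemma Q_lt_y:
  assumes q: "0 < q" "q < 1" and Qd: "Q = q^2" and yd: "y = exp (-2 * \<beta>)"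
    and summ: "(\<lambda>i::int. inverse (1 + q powr (2 * (real_of_int i - c)) * exp (\<beta> * real_of_int (i - 1))
            / (exp (\<beta> * \<bar>real_of_int i\<bar>) + q^2 * exp (\<beta> * \<bar>real_of_int (i - 2)\<bar>)))) summable_on {..0}"
  shows "Q < y"
proof (rule ccontr)
  assume "\<not> Q < y"
  then have yQ: "y \<le> Q" by simp
  have Q0: "0 < Q" using q Qd by simp
  have y0: "0 < y" using yd by simp
  define z where "z = Q / y"
  have z1: "1 \<le> z" unfolding z_def using yQ y0 by simp
  define K where "K = Q powr (- c) * exp (- \<beta>) / (1 + z)"
  have K0: "0 \<le> K" unfolding K_def using z1 by simp
  define f where "f = (\<lambda>i::int. inverse (1 + q powr (2 * (real_of_int i - c)) * exp (\<beta> * real_of_int (i - 1))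
            / (exp (\<beta> * \<bar>real_of_int i\<bar>) + q^2 * exp (\<beta> * \<bar>real_of_int (i - 2)\<bar>))))"
  have ratio: "q powr (2 * (real_of_int i - c)) * exp (\<beta> * real_of_int (i - 1))
            / (exp (\<beta> * \<bar>real_of_int i\<bar>) + q^2 * exp (\<beta> * \<bar>real_of_int (i - 2)\<bar>)) = K * z powr real_of_int i"
    if i: "i \<le> 0" for i
  proof -
    have a1: "\<bar>real_of_int i\<bar> = - real_of_int i" "\<bar>real_of_int (i - 2)\<bar> = 2 - real_of_int i" using i by auto
    have qq: "q powr (2 * (real_of_int i - c)) = Q powr real_of_int i * Q powr (- c)"
      unfolding q_powr_2[OF q(1)] Qd[symmetric] by (simp add: powr_add[symmetric])
    have den: "exp (\<beta> * (- real_of_int i)) + Q * exp (\<beta> * (2 - real_of_int i)) = exp (- \<beta> * real_of_int i) * (1 + z)"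
    proof -
      have "exp (\<beta> * (2 - real_of_int i)) = exp (2 * \<beta>) * exp (- \<beta> * real_of_int i)"
        by (subst exp_add[symmetric]) (simp add: algebra_simps)
      then have h1: "Q * exp (\<beta> * (2 - real_of_int i)) = exp (- \<beta> * real_of_int i) * (Q * exp (2 * \<beta>))"
        by simp
      have h2: "Q * exp (2 * \<beta>) = z" unfolding z_def yd by (simp add: exp_minus field_simps)
      show ?thesis unfolding h1 h2 by (simp add: algebra_simps)
    qed
    have num: "exp (\<beta> * real_of_int (i - 1)) = exp (\<beta> * real_of_int i) * exp (- \<beta>)"
      by (simp add: exp_add[symmetric] algebra_simps)
    have zz: "Q powr real_of_int i * exp (\<beta> * real_of_int i) / exp (- \<beta> * real_of_int i) = z powr real_of_int i"
    proof -
      have "Q powr real_of_int i * exp (\<beta> * real_of_int i) / exp (- \<beta> * real_of_int i) = Q powr real_of_int i * exp (2 * \<beta> * real_of_int i)"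
        by (simp add: exp_minus exp_add[symmetric] field_simps)
      also have "exp (2 * \<beta> * real_of_int i) = (1 / y) powr real_of_int i"
        unfolding exp_int_powr yd by (simp add: exp_minus divide_inverse)
      also have "Q powr real_of_int i * (1 / y) powr real_of_int i = z powr real_of_int i"
        unfolding z_def using Q0 y0 by (simp add: powr_mult[symmetric])
      finally show ?thesis .
    qed
    have "q powr (2 * (real_of_int i - c)) * exp (\<beta> * real_of_int (i - 1))
            / (exp (\<beta> * \<bar>real_of_int i\<bar>) + q^2 * exp (\<beta> * \<bar>real_of_int (i - 2)\<bar>))
        = Q powr real_of_int i * Q powr (- c) * (exp (\<beta> * real_of_int i) * exp (- \<beta>)) / (exp (- \<beta> * real_of_int i) * (1 + z))"
      unfolding a1 qq num Qd[symmetric] den ..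
    also have "\<dots> = (Q powr real_of_int i * exp (\<beta> * real_of_int i) / exp (- \<beta> * real_of_int i)) * K"
      unfolding K_def by (simp add: field_simps)
    finally show ?thesis unfolding zz by simp
  qed
  define \<delta> where "\<delta> = inverse (1 + K)"
  have d0: "0 < \<delta>" unfolding \<delta>_def using K0 by simp
  have fge: "\<delta> \<le> f i" if "i \<le> 0" for i
  proof -
    have "z powr real_of_int i \<le> 1"
    proof -
      have "1 \<le> z powr (- real_of_int i)" using z1 that by (intro ge_one_powr_ge_zero) auto
      then show ?thesis using z1 by (simp add: powr_minus field_simps)
    qed
    then have "K * z powr real_of_int i \<le> K" using K0 mult_left_mono[of "z powr real_of_int i" 1 K] by simp
    moreover have "0 \<le> K * z powr real_of_int i" using K0 by simp
    ultimately show ?thesis unfolding f_def \<delta>_def ratio[OF that]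
      by (intro le_imp_inverse_le) auto
  qed
  have fs: "f summable_on {..0}" using summ unfolding f_def .
  have fnn: "0 \<le> f i" if "i \<le> 0" for i using fge[OF that] d0 by linarith
  obtain N :: nat where N: "infsum f {..0} < \<delta> * real N"
  proof -
    obtain N :: nat where "infsum f {..0} / \<delta> < real N" using reals_Archimedean2 by blast
    then have "infsum f {..0} < \<delta> * real N" using d0 by (simp add: field_simps)
    then show ?thesis using that by blast
  qed
  have "\<delta> * real N = (\<Sum>i\<in>{- int N + 1..0}. \<delta>)" by simp
  also have "\<dots> \<le> (\<Sum>i\<in>{- int N + 1..0}. f i)" by (intro sum_mono fge) auto
  also have "\<dots> \<le> infsum f {..0}" by (rule finite_sum_le_infsum[OF fs]) (use fnn in auto)
  finally show False using N by simp
qed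

lemma r_summable:
  assumes "0 < Q" "Q < 1"
  shows "(\<lambda>i::int. C * Q powr (real_of_int i - c)) summable_on {1..}"
proof -
  have "((\<lambda>t::int. Q powr real_of_int t) has_sum (Q powr real_of_int 1 / (1 - Q))) {1..}"
    by (rule has_sum_geom_int) (use assms in auto)
  then have "(\<lambda>t::int. Q powr real_of_int t) summable_on {1..}" by (rule has_sum_imp_summable)
  then have "(\<lambda>t::int. (C * Q powr (- c)) * Q powr real_of_int t) summable_on {1..}"
    by (rule summable_on_cmult_right)
  then show ?thesis by (simp add: powr_add[symmetric] mult.assoc)
qed

lemma rho_summable:
  assumes Q0: "0 < Q" and Qy: "Q < y" and yd: "y = exp (-2 * \<beta>)"
  shows "(\<lambda>i::int. C * Q powr (c - real_of_int i) * exp (2 * \<beta> * (1 - real_of_int i))) summable_on {..0}"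
proof -
  have y0: "0 < y" using yd by simp
  define z where "z = Q / y"
  have z0: "0 < z" "z < 1" unfolding z_def using Q0 Qy y0 by auto
  have "((\<lambda>t::int. z powr real_of_int t) has_sum (z powr real_of_int 0 / (1 - z))) {0..}"
    by (rule has_sum_geom_int) (use z0 in auto)
  then have "(\<lambda>t::int. z powr real_of_int t) summable_on {0..}" by (rule has_sum_imp_summable)
  then have s: "(\<lambda>t::int. (C * Q powr c * exp (2 * \<beta>)) * z powr real_of_int t) summable_on {0..}"
    by (rule summable_on_cmult_right)
  have eq: "C * Q powr (c - real_of_int (- t)) * exp (2 * \<beta> * (1 - real_of_int (- t))) = (C * Q powr c * exp (2 * \<beta>)) * z powr real_of_int t" for t :: int
  proof -
    have "exp (2 * \<beta> * (1 - real_of_int (- t))) = exp (2 * \<beta>) * exp (2 * \<beta> * real_of_int t)"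
      by (simp add: exp_add[symmetric] algebra_simps)
    also have "exp (2 * \<beta> * real_of_int t) = (1 / y) powr real_of_int t"
      unfolding exp_int_powr yd by (simp add: exp_minus divide_inverse)
    finally have "exp (2 * \<beta> * (1 - real_of_int (- t))) = exp (2 * \<beta>) * (1 / y) powr real_of_int t" .
    moreover have "Q powr (c - real_of_int (- t)) = Q powr c * Q powr real_of_int t" by (simp add: powr_add[symmetric])
    moreover have "Q powr real_of_int t * (1 / y) powr real_of_int t = z powr real_of_int t"
      unfolding z_def using Q0 y0 by (simp add: powr_mult[symmetric])
    ultimately show ?thesis by (simp add: mult_ac)
  qed
  have "(\<lambda>i::int. C * Q powr (c - real_of_int i) * exp (2 * \<beta> * (1 - real_of_int i))) summable_on uminus ` {0..}"
  proof (subst summable_on_reindex)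
    show "inj_on uminus {0::int..}" by (simp add: inj_on_def)
    show "((\<lambda>i::int. C * Q powr (c - real_of_int i) * exp (2 * \<beta> * (1 - real_of_int i))) \<circ> uminus) summable_on {0..}"
      unfolding o_def eq using s .
  qed
  moreover have "uminus ` {0::int..} = {..0}"
    by (auto simp: image_iff)
  ultimately show ?thesis by simp
qed

lemma AB_prod: "AB = {A. A \<subseteq> {1..} \<and> finite A} \<times> {B. B \<subseteq> {..0} \<and> finite B}"
  unfolding AB_def by auto

lemma B_set_image: "B_set = (\<lambda>(A,B). cfg A B) ` AB"
proof
  show "B_set \<subseteq> (\<lambda>(A,B). cfg A B) ` AB"
  proof
    fix \<sigma> assume s: "\<sigma> \<in> B_set"
    note d = B_set_decomp[OF s]
    have "(Aof \<sigma>, Bof \<sigma>) \<in> AB" unfolding AB_def using d by auto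
    then show "\<sigma> \<in> (\<lambda>(A,B). cfg A B) ` AB" using d(5) by (auto simp: image_iff intro!: bexI[of _ "(Aof \<sigma>, Bof \<sigma>)"])
  qed
  show "(\<lambda>(A,B). cfg A B) ` AB \<subseteq> B_set" unfolding AB_def using cfg_in_B by auto
qed

lemma cfg_inj: "inj_on (\<lambda>(A,B). cfg A B) AB"
proof (rule inj_onI)
  fix x y assume x: "x \<in> AB" and y: "y \<in> AB" and e: "(\<lambda>(A,B). cfg A B) x = (\<lambda>(A,B). cfg A B) y"
  obtain A B where xx: "x = (A, B)" "A \<subseteq> {1..}" "B \<subseteq> {..0}" using x unfolding AB_def by auto
  obtain A' B' where yy: "y = (A', B')" "A' \<subseteq> {1..}" "B' \<subseteq> {..0}" using y unfolding AB_def by auto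
  have "cfg A B = cfg A' B'" using e xx yy by simp
  then have "Aof (cfg A B) = Aof (cfg A' B')" "Bof (cfg A B) = Bof (cfg A' B')" by simp_all
  then show "x = y" using xx yy Aof_cfg Bof_cfg by simp
qed

lemma weight_exp_summable:
  assumes q: "0 < q" "q < 1" and Qd: "Q = q^2" and yd: "y = exp (-2 * \<beta>)" and b0: "0 \<le> \<beta>"
    and Qy: "Q < y" and k0: "0 \<le> \<kappa>"
  shows "(\<lambda>\<sigma>. weight (\<lambda>i. real_of_int i) \<beta> q c \<sigma> * exp (\<kappa> * H1 \<sigma>)) summable_on B_set"
proof -
  have Q0: "0 < Q" and Q1: "Q < 1" using q Qd by (auto simp: power_less_one_iff abs_square_less_1)
  define r where "r = (\<lambda>i::int. exp (2 * \<kappa>) * Q powr (real_of_int i - c))"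
  define \<rho> where "\<rho> = (\<lambda>i::int. exp (2 * \<kappa>) * Q powr (c - real_of_int i) * exp (2 * \<beta> * (1 - real_of_int i)))"
  have rs: "r summable_on {1..}" unfolding r_def by (rule r_summable[OF Q0 Q1])
  have \<rho>s: "\<rho> summable_on {..0}" unfolding \<rho>_def by (rule rho_summable[OF Q0 Qy yd])
  have s1: "(\<lambda>A. \<Prod>i\<in>A. r i) summable_on {A. A \<subseteq> {1..} \<and> finite A}"
    by (rule fin_subsets_summable[OF _ rs]) (simp add: r_def)
  have s2: "(\<lambda>B. \<Prod>i\<in>B. \<rho> i) summable_on {B. B \<subseteq> {..0} \<and> finite B}"
    by (rule fin_subsets_summable[OF _ \<rho>s]) (simp add: \<rho>_def)
  have s12: "(\<lambda>(A,B). (\<Prod>i\<in>A. r i) * (\<Prod>i\<in>B. \<rho> i)) summable_on AB"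
    unfolding AB_prod by (rule summable_times_nonneg[OF s1 s2]) (auto simp: r_def \<rho>_def intro: prod_nonneg)
  then have sb: "(\<lambda>p. exp \<kappa> * (\<lambda>(A,B). (\<Prod>i\<in>A. r i) * (\<Prod>i\<in>B. \<rho> i)) p) summable_on AB"
    by (rule summable_on_cmult_right)
  have sc: "((\<lambda>\<sigma>. weight (\<lambda>i. real_of_int i) \<beta> q c \<sigma> * exp (\<kappa> * H1 \<sigma>)) \<circ> (\<lambda>(A,B). cfg A B)) summable_on AB"
  proof (rule summable_on_comparison_test[OF sb])
    fix p assume p: "p \<in> AB"
    then obtain A B where pp: "p = (A, B)" "finite A" "A \<subseteq> {1..}" "finite B" "B \<subseteq> {..0}" unfolding AB_def by auto
    show "((\<lambda>\<sigma>. weight (\<lambda>i. real_of_int i) \<beta> q c \<sigma> * exp (\<kappa> * H1 \<sigma>)) \<circ> (\<lambda>(A,B). cfg A B)) p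
          \<le> exp \<kappa> * (\<lambda>(A,B). (\<Prod>i\<in>A. r i) * (\<Prod>i\<in>B. \<rho> i)) p"
      using weight_bound[OF pp(2,3,4,5) q(1) Qd b0 k0, of c] pp(1) unfolding r_def \<rho>_def by (simp add: mult.assoc)
    show "0 \<le> ((\<lambda>\<sigma>. weight (\<lambda>i. real_of_int i) \<beta> q c \<sigma> * exp (\<kappa> * H1 \<sigma>)) \<circ> (\<lambda>(A,B). cfg A B)) p"
      by (simp add: weight_def case_prod_unfold)
  qed
  show ?thesis unfolding B_set_image using sc by (subst summable_on_reindex[OF cfg_inj])
qed

lemma H1_nonneg: "0 \<le> H1 \<sigma>"
  unfolding H1_def H_def by (simp add: sum_nonneg)

lemma fam_nonneg: "0 \<le> fam \<beta> q c n \<sigma>"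
  unfolding fam_def weight_def by simp

lemma fam_summable:
  assumes q: "0 < q" "q < 1" and Qd: "Q = q^2" and yd: "y = exp (-2 * \<beta>)" and b0: "0 \<le> \<beta>"
    and Qy: "Q < y"
  shows "fam \<beta> q c n summable_on B_set"
proof (rule summable_on_comparison_test[OF weight_exp_summable[OF q Qd yd b0 Qy, of "\<bar>real_of_int n\<bar> * \<beta>" c]])
  show "0 \<le> \<bar>real_of_int n\<bar> * \<beta>" using b0 by simp
  fix \<sigma> assume "\<sigma> \<in> B_set"
  show "0 \<le> fam \<beta> q c n \<sigma>" by (rule fam_nonneg)
  have "- real_of_int n * \<beta> * H1 \<sigma> \<le> \<bar>real_of_int n\<bar> * \<beta> * H1 \<sigma>"
    using b0 H1_nonneg[of \<sigma>] by (intro mult_right_mono) (auto simp: mult_right_mono)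
  then have "(if Ncount \<sigma> = 0 then 1 else 0) * exp (- real_of_int n * \<beta> * H1 \<sigma>) \<le> exp (\<bar>real_of_int n\<bar> * \<beta> * H1 \<sigma>)"
    by auto
  then show "fam \<beta> q c n \<sigma> \<le> weight (\<lambda>i. real_of_int i) \<beta> q c \<sigma> * exp (\<bar>real_of_int n\<bar> * \<beta> * H1 \<sigma>)"
    unfolding fam_def by (intro mult_left_mono) (auto simp: weight_def)
qed

lemma V_pos: "V b ms ts \<Longrightarrow> \<forall>x\<in>set ms. 1 \<le> x"
  by (induction ms arbitrary: b ts) (auto elim: V.elims)

definition Iset :: "((nat \<times> nat) \<times> ((nat list \<times> nat list) \<times> (int list \<times> int list))) set" where
  "Iset = Sigma ({1..} \<times> {1..}) (\<lambda>(L,R). Sigma (tuples L R) (\<lambda>(ls,ms). {us. V 0 ls us} \<times> {ts. V 1 ms ts}))"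

definition Phi' :: "((nat \<times> nat) \<times> ((nat list \<times> nat list) \<times> (int list \<times> int list))) \<Rightarrow> int \<Rightarrow> int" where
  "Phi' p = (case p of ((L,R),((ls,ms),(us,ts))) \<Rightarrow> Phi ls ms us ts)"

definition ground :: "int \<Rightarrow> int" where "ground = cfg {} {}"

lemma Iset_mem: "p \<in> Iset \<longleftrightarrow> (\<exists>L R ls ms us ts. p = ((L,R),((ls,ms),(us,ts))) \<and> 1 \<le> L \<and> 1 \<le> R \<and>
   (ls,ms) \<in> tuples L R \<and> V 0 ls us \<and> V 1 ms ts)"
  unfolding Iset_def by auto

lemma Phi_facts:
  assumes "(ls,ms) \<in> tuples L R" "1 \<le> L" "1 \<le> R" "V 0 ls us" "V 1 ms ts"
  shows "Phi ls ms us ts \<in> B_set" "Ncount (Phi ls ms us ts) = 0" "Phi ls ms us ts \<noteq> ground"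
    "Aof (Phi ls ms us ts) = P ms ts" "Bof (Phi ls ms us ts) = uminus ` P ls us"
proof -
  have lens: "length ls = L" "length ms = R" "sum_list ms = sum_list ls" using assms(1) unfolding tuples_def by auto
  have As: "P ms ts \<subseteq> {1..}" using P_ge[OF assms(5)] by simp
  have Bs: "uminus ` P ls us \<subseteq> {..0}" using P_ge[OF assms(4)] by auto
  show "Phi ls ms us ts \<in> B_set" unfolding Phi_def by (rule cfg_in_B) (use As Bs P_finite in auto)
  have "card (uminus ` P ls us) = card (P ls us)" by (rule card_image) (simp add: inj_on_def)
  then show "Ncount (Phi ls ms us ts) = 0" unfolding Phi_def using Ncount_cfg[OF As Bs] P_card[OF assms(4)] P_card[OF assms(5)] lens by simp
  show A: "Aof (Phi ls ms us ts) = P ms ts" unfolding Phi_def by (rule Aof_cfg[OF As])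
  show "Bof (Phi ls ms us ts) = uminus ` P ls us" unfolding Phi_def by (rule Bof_cfg[OF Bs])
  have "ms \<noteq> []" using lens assms(3) by auto
  then obtain m ms' where "ms = m # ms'" by (cases ms) auto
  then have "P ms ts \<noteq> {}" using P_nonempty assms(5) by blast
  moreover have "Aof ground = {}" unfolding ground_def by (simp add: Aof_cfg)
  ultimately show "Phi ls ms us ts \<noteq> ground" using A by auto
qed

lemma Phi'_inj: "inj_on Phi' Iset"
proof (rule inj_onI)
  fix p p' assume p: "p \<in> Iset" and p': "p' \<in> Iset" and e: "Phi' p = Phi' p'"
  obtain L R ls ms us ts where pp: "p = ((L,R),((ls,ms),(us,ts)))" "1 \<le> L" "1 \<le> R" "(ls,ms) \<in> tuples L R" "V 0 ls us" "V 1 ms ts"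
    using p unfolding Iset_mem by blast
  obtain L' R' ls' ms' us' ts' where pp': "p' = ((L',R'),((ls',ms'),(us',ts')))" "1 \<le> L'" "1 \<le> R'" "(ls',ms') \<in> tuples L' R'" "V 0 ls' us'" "V 1 ms' ts'"
    using p' unfolding Iset_mem by blast
  note f = Phi_facts[OF pp(4,2,3,5,6)] and f' = Phi_facts[OF pp'(4,2,3,5,6)]
  have e2: "Phi ls ms us ts = Phi ls' ms' us' ts'" using e pp pp' unfolding Phi'_def by simp
  have "P ms ts = P ms' ts'" using f(4) f'(4) e2 by simp
  then have m: "ms = ms' \<and> ts = ts'" using P_inj[OF pp(6) pp'(6)] by blast
  have "uminus ` P ls us = uminus ` P ls' us'" using f(5) f'(5) e2 by simp
  then have "P ls us = P ls' us'" by (subst (asm) inj_image_eq_iff) (auto simp: inj_def)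
  then have l: "ls = ls' \<and> us = us'" using P_inj[OF pp(5) pp'(5)] by blast
  have "L = L'" "R = R'" using pp(4) pp'(4) m l unfolding tuples_def by auto
  then show "p = p'" using pp pp' m l by simp
qed

lemma Phi'_image: "Phi' ` Iset = {\<sigma> \<in> B_set. Ncount \<sigma> = 0} - {ground}"
proof
  show "Phi' ` Iset \<subseteq> {\<sigma> \<in> B_set. Ncount \<sigma> = 0} - {ground}"
  proof
    fix \<sigma> assume "\<sigma> \<in> Phi' ` Iset"
    then obtain p where p: "p \<in> Iset" "\<sigma> = Phi' p" by blast
    obtain L R ls ms us ts where pp: "p = ((L,R),((ls,ms),(us,ts)))" "1 \<le> L" "1 \<le> R" "(ls,ms) \<in> tuples L R" "V 0 ls us" "V 1 ms ts"
      using p unfolding Iset_mem by blast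
    note f = Phi_facts[OF pp(4,2,3,5,6)]
    show "\<sigma> \<in> {\<sigma> \<in> B_set. Ncount \<sigma> = 0} - {ground}" using f p(2) pp(1) unfolding Phi'_def by simp
  qed
  show "{\<sigma> \<in> B_set. Ncount \<sigma> = 0} - {ground} \<subseteq> Phi' ` Iset"
  proof
    fix \<sigma> assume s: "\<sigma> \<in> {\<sigma> \<in> B_set. Ncount \<sigma> = 0} - {ground}"
    then have sB: "\<sigma> \<in> B_set" and N: "Ncount \<sigma> = 0" and ng: "\<sigma> \<noteq> ground" by auto
    note d = B_set_decomp[OF sB]
    define A where "A = Aof \<sigma>"
    define B where "B = Bof \<sigma>"
    have sig: "\<sigma> = cfg A B" unfolding A_def B_def by (rule d(5))
    have dd: "finite A" "finite B" "A \<subseteq> {1..}" "B \<subseteq> {..0}" unfolding A_def B_def using d(1-4) by auto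
    have "Ncount (cfg A B) = 0" using N sig by simp
    then have cAB: "card A = card B" using Ncount_cfg[OF dd(3,4)] by simp
    have Ane: "A \<noteq> {}"
    proof
      assume "A = {}"
      then have "B = {}" using cAB dd(2) by simp
      then show False using ng sig \<open>A = {}\<close> unfolding ground_def by simp
    qed
    have Bne: "B \<noteq> {}" using Ane cAB dd(1) by auto
    obtain ms ts where mt: "V 1 ms ts" "P ms ts = A" using P_surj[of A 1] dd(1,3) by auto
    have B'f: "finite (uminus ` B)" "uminus ` B \<subseteq> {0..}" using dd(2,4) by auto
    obtain ls us where lu: "V 0 ls us" "P ls us = uminus ` B" using P_surj[OF B'f] by auto
    have Bback: "uminus ` P ls us = B" using lu(2) by (auto simp: image_iff)
    have msne: "ms \<noteq> []" using mt Ane by (cases ms) auto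
    have lsne: "ls \<noteq> []" using lu Bne by (cases ls) auto
    have sl: "sum_list ms = sum_list ls"
    proof -
      have "sum_list ms = card A" using P_card[OF mt(1)] mt(2) by simp
      also have "\<dots> = card B" by (rule cAB)
      also have "\<dots> = card (uminus ` B)" by (rule card_image[symmetric]) (simp add: inj_on_def)
      also have "\<dots> = sum_list ls" using P_card[OF lu(1)] lu(2) by simp
      finally show ?thesis .
    qed
    have tup: "(ls, ms) \<in> tuples (length ls) (length ms)"
      unfolding tuples_def using V_pos[OF mt(1)] V_pos[OF lu(1)] sl by auto
    have "((length ls, length ms), ((ls, ms), (us, ts))) \<in> Iset"
      unfolding Iset_mem using tup lu(1) mt(1) msne lsne by (auto simp: Suc_le_eq)
    moreover have "Phi' ((length ls, length ms), ((ls, ms), (us, ts))) = \<sigma>"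
      unfolding Phi'_def Phi_def using sig mt(2) Bback by simp
    ultimately show "\<sigma> \<in> Phi' ` Iset" by (metis image_eqI)
  qed
qed

lemma ground_facts:
  assumes "0 < q"
  shows "ground \<in> B_set" "weight (\<lambda>i. real_of_int i) \<beta> q c ground = 1"
    "fam \<beta> q c n ground = exp (- real_of_int n * \<beta>)"
proof -
  show "ground \<in> B_set" unfolding ground_def by (rule cfg_in_B) auto
  have D0: "D {} = {}" unfolding D_def by simp
  have H: "H (\<lambda>i. real_of_int i) ground = 0" unfolding ground_def using walls_facts(1)[of "{}" "{}"] D0 by simp
  have H1: "H1 ground = 1" unfolding ground_def using walls_facts(2)[of "{}" "{}"] D0 by simp
  have fc: "fc c ground = 0" unfolding ground_def using fc_cfg[of "{}" "{}" c] by simp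
  have N: "Ncount ground = 0" unfolding ground_def using Ncount_cfg[of "{}" "{}"] by simp
  show w: "weight (\<lambda>i. real_of_int i) \<beta> q c ground = 1" unfolding weight_def H fc using assms by simp
  show "fam \<beta> q c n ground = exp (- real_of_int n * \<beta>)" unfolding fam_def w N H1 by simp
qed

theorem corollary4p4:
  fixes c \<beta> q Q y :: real and J :: "int \<Rightarrow> real" and n :: int
  assumes "\<beta> \<ge> 0" and "0 < q" and "q < 1" and "Q = q^2" and "y = exp (-2 * \<beta>)"
    and "J = (\<lambda>i. real_of_int i)"
    and "(\<lambda>i::int. inverse (1 + q powr (2 * (real_of_int i - c)) * exp (\<beta> * J (i - 1))
            / (exp (\<beta> * \<bar>J i\<bar>) + q^2 * exp (\<beta> * \<bar>J (i - 2)\<bar>)))) summable_on {..0}"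
    and "(\<lambda>i::int. inverse (1 + q powr (- 2 * (real_of_int i - c)) * exp (\<beta> * J (i - 1))
            / (exp (\<beta> * \<bar>J i\<bar>) + q powr (-2) * exp (\<beta> * \<bar>J (i - 2)\<bar>)))) summable_on {1..}"
  shows "Zpart J \<beta> q c * mu J \<beta> q c (\<lambda>\<sigma>. (if Ncount \<sigma> = 0 then 1 else 0) * exp (- real_of_int n * \<beta> * H1 \<sigma>))
    = exp (- real_of_int n * \<beta>)
      + (\<Sum>\<^sub>\<infinity>(L, R)\<in>{1..} \<times> {1..}. y powr real_of_int (n * int L + (n - 1) * int R)
           * (\<Sum>\<^sub>\<infinity>(ls, ms)\<in>tuples L R. inner_term y Q n ls ms))"
proof -
  note b0 = assms(1) and q = assms(2,3) and Qd = assms(4) and yd = assms(5) and Jd = assms(6)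
  have summ: "(\<lambda>i::int. inverse (1 + q powr (2 * (real_of_int i - c)) * exp (\<beta> * real_of_int (i - 1))
            / (exp (\<beta> * \<bar>real_of_int i\<bar>) + q^2 * exp (\<beta> * \<bar>real_of_int (i - 2)\<bar>)))) summable_on {..0}"
    using assms(7) unfolding Jd .
  have Qy: "Q < y" by (rule Q_lt_y[OF q Qd yd summ])
  define F where "F = (\<lambda>\<sigma>::int\<Rightarrow>int. (if Ncount \<sigma> = 0 then 1 else 0) * exp (- real_of_int n * \<beta> * H1 \<sigma>))"
  have famEq: "weight J \<beta> q c \<sigma> * F \<sigma> = fam \<beta> q c n \<sigma>" for \<sigma>
    unfolding fam_def F_def Jd ..
  have wsum: "weight J \<beta> q c summable_on B_set"
    using weight_exp_summable[OF q Qd yd b0 Qy, of 0 c] unfolding Jd by simp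
  have gf: "ground \<in> B_set" "weight (\<lambda>i. real_of_int i) \<beta> q c ground = 1"
    "fam \<beta> q c n ground = exp (- real_of_int n * \<beta>)" using ground_facts[OF q(1)] by auto
  have Zpos: "0 < Zpart J \<beta> q c"
  proof -
    have "(\<Sum>\<sigma>\<in>{ground}. weight J \<beta> q c \<sigma>) \<le> Zpart J \<beta> q c"
      unfolding Zpart_def by (rule finite_sum_le_infsum[OF wsum]) (use gf(1) in \<open>auto simp: weight_def\<close>)
    then show ?thesis using gf(2) unfolding Jd by simp
  qed
  have "Zpart J \<beta> q c * mu J \<beta> q c F = (\<Sum>\<^sub>\<infinity>\<sigma>\<in>B_set. weight J \<beta> q c \<sigma> * F \<sigma>)"
    unfolding mu_def using Zpos by simp
  also have "\<dots> = infsum (fam \<beta> q c n) B_set" using famEq by simp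
  finally have lhs: "Zpart J \<beta> q c * mu J \<beta> q c F = infsum (fam \<beta> q c n) B_set" .
  have fsum: "fam \<beta> q c n summable_on B_set" by (rule fam_summable[OF q Qd yd b0 Qy])
  have "infsum (fam \<beta> q c n) B_set = fam \<beta> q c n ground + infsum (fam \<beta> q c n) (B_set - {ground})"
  proof -
    have "B_set = insert ground (B_set - {ground})" using gf(1) by auto
    then have "infsum (fam \<beta> q c n) B_set = infsum (fam \<beta> q c n) (insert ground (B_set - {ground}))" by simp
    also have "\<dots> = fam \<beta> q c n ground + infsum (fam \<beta> q c n) (B_set - {ground})"
      by (rule infsum_insert) (use summable_on_subset_banach[OF fsum] in auto)
    finally show ?thesis .
  qed
  also have "infsum (fam \<beta> q c n) (B_set - {ground}) = infsum (fam \<beta> q c n) (Phi' ` Iset)"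
  proof (rule infsum_cong_neutral)
    fix x assume "x \<in> Phi' ` Iset - (B_set - {ground})"
    then show "fam \<beta> q c n x = 0" unfolding Phi'_image by auto
  next
    fix x assume "x \<in> B_set - {ground} - Phi' ` Iset"
    then have "Ncount x \<noteq> 0" unfolding Phi'_image by auto
    then show "fam \<beta> q c n x = 0" unfolding fam_def by simp
  qed simp
  also have "\<dots> = infsum (fam \<beta> q c n \<circ> Phi') Iset" by (rule infsum_reindex[OF Phi'_inj])
  finally have step1: "infsum (fam \<beta> q c n) B_set = exp (- real_of_int n * \<beta>) + infsum (fam \<beta> q c n \<circ> Phi') Iset"
    using gf(3) by simp
  have isum: "(fam \<beta> q c n \<circ> Phi') summable_on Iset"
  proof -
    have "fam \<beta> q c n summable_on Phi' ` Iset"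
      by (rule summable_on_subset_banach[OF fsum]) (auto simp: Phi'_image)
    then show ?thesis by (subst (asm) summable_on_reindex[OF Phi'_inj])
  qed
  define B1 where "B1 = (\<lambda>x::nat\<times>nat. case x of (L,R) \<Rightarrow> Sigma (tuples L R) (\<lambda>(ls,ms). {us. V 0 ls us} \<times> {ts. V 1 ms ts}))"
  have Iset_S: "Iset = Sigma ({1..} \<times> {1..}) B1" unfolding Iset_def B1_def by simp
  have isum2: "(\<lambda>(x,z). (fam \<beta> q c n \<circ> Phi') (x,z)) summable_on Sigma ({1..} \<times> {1..}) B1"
  proof -
    have "(\<lambda>(x,z). (fam \<beta> q c n \<circ> Phi') (x,z)) = fam \<beta> q c n \<circ> Phi'" by auto
    then show ?thesis using isum unfolding Iset_S by simp
  qed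
  have "infsum (fam \<beta> q c n \<circ> Phi') Iset = (\<Sum>\<^sub>\<infinity>x\<in>({1..}::nat set) \<times> ({1..}::nat set). \<Sum>\<^sub>\<infinity>z\<in>B1 x. (fam \<beta> q c n \<circ> Phi') (x, z))"
    unfolding Iset_S by (rule infsum_Sigma_banach[symmetric]) (use isum Iset_S in simp)
  also have "\<dots> = (\<Sum>\<^sub>\<infinity>(L, R)\<in>{1..} \<times> {1..}. y powr real_of_int (n * int L + (n - 1) * int R)
           * (\<Sum>\<^sub>\<infinity>(ls, ms)\<in>tuples L R. inner_term y Q n ls ms))"
  proof (rule infsum_cong)
    fix x assume x: "x \<in> ({1..} :: nat set) \<times> ({1..} :: nat set)"
    obtain L R where xx: "x = (L, R)" "1 \<le> L" "1 \<le> R" using x by auto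
    have s3: "(\<lambda>z. (fam \<beta> q c n \<circ> Phi') (x, z)) summable_on B1 x"
      by (rule summable_on_SigmaD1[OF isum2 x])
    have s4: "(\<lambda>(u,w). (fam \<beta> q c n \<circ> Phi') (x, (u, w))) summable_on Sigma (tuples L R) (\<lambda>(ls,ms). {us. V 0 ls us} \<times> {ts. V 1 ms ts})"
      using s3 unfolding B1_def xx(1) by (simp add: case_prod_unfold)
    have "(\<Sum>\<^sub>\<infinity>z\<in>B1 x. (fam \<beta> q c n \<circ> Phi') (x, z))
        = (\<Sum>\<^sub>\<infinity>u\<in>tuples L R. \<Sum>\<^sub>\<infinity>w\<in>(\<lambda>(ls,ms). {us. V 0 ls us} \<times> {ts. V 1 ms ts}) u. (fam \<beta> q c n \<circ> Phi') (x, (u, w)))"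
    proof -
      have "(\<Sum>\<^sub>\<infinity>z\<in>B1 x. (fam \<beta> q c n \<circ> Phi') (x, z)) = (\<Sum>\<^sub>\<infinity>z\<in>Sigma (tuples L R) (\<lambda>(ls,ms). {us. V 0 ls us} \<times> {ts. V 1 ms ts}). (fam \<beta> q c n \<circ> Phi') (x, z))"
        unfolding B1_def xx(1) by simp
      also have "\<dots> = (\<Sum>\<^sub>\<infinity>u\<in>tuples L R. \<Sum>\<^sub>\<infinity>w\<in>(\<lambda>(ls,ms). {us. V 0 ls us} \<times> {ts. V 1 ms ts}) u. (fam \<beta> q c n \<circ> Phi') (x, (u, w)))"
        by (rule infsum_Sigma_banach[symmetric]) (use s4 in \<open>simp add: case_prod_unfold\<close>)
      finally show ?thesis .
    qed
    also have "\<dots> = (\<Sum>\<^sub>\<infinity>u\<in>tuples L R. (\<lambda>(ls,ms). y powr real_of_int (n * int L + (n - 1) * int R) * inner_term y Q n ls ms) u)"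
    proof (rule infsum_cong)
      fix u assume u: "u \<in> tuples L R"
      obtain ls ms where uu: "u = (ls, ms)" by (cases u)
      have bh: "((\<lambda>(us,ts). fam \<beta> q c n (Phi ls ms us ts)) has_sum
          (y powr real_of_int (n * int L + (n - 1) * int R) * inner_term y Q n ls ms))
         ({us. V 0 ls us} \<times> {ts. V 1 ms ts})"
        by (rule block_has_sum[OF q Qd yd b0 Qy u[unfolded uu] xx(2,3)])
      have "(\<Sum>\<^sub>\<infinity>w\<in>(\<lambda>(ls,ms). {us. V 0 ls us} \<times> {ts. V 1 ms ts}) u. (fam \<beta> q c n \<circ> Phi') (x, (u, w)))
          = (\<Sum>\<^sub>\<infinity>w\<in>{us. V 0 ls us} \<times> {ts. V 1 ms ts}. (\<lambda>(us,ts). fam \<beta> q c n (Phi ls ms us ts)) w)"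
        unfolding uu xx(1) case_prod_conv by (rule infsum_cong) (auto simp: Phi'_def)
      also have "\<dots> = y powr real_of_int (n * int L + (n - 1) * int R) * inner_term y Q n ls ms"
        using bh by (rule infsumI)
      finally show "(\<Sum>\<^sub>\<infinity>w\<in>(\<lambda>(ls,ms). {us. V 0 ls us} \<times> {ts. V 1 ms ts}) u. (fam \<beta> q c n \<circ> Phi') (x, (u, w)))
          = (\<lambda>(ls,ms). y powr real_of_int (n * int L + (n - 1) * int R) * inner_term y Q n ls ms) u"
        using uu by simp
    qed
    also have "\<dots> = y powr real_of_int (n * int L + (n - 1) * int R) * (\<Sum>\<^sub>\<infinity>(ls, ms)\<in>tuples L R. inner_term y Q n ls ms)"
      by (simp add: case_prod_unfold infsum_cmult_right')
    finally show "(\<Sum>\<^sub>\<infinity>z\<in>B1 x. (fam \<beta> q c n \<circ> Phi') (x, z)) =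
       (case x of (L, R) \<Rightarrow> y powr real_of_int (n * int L + (n - 1) * int R) * (\<Sum>\<^sub>\<infinity>(ls, ms)\<in>tuples L R. inner_term y Q n ls ms))"
      using xx(1) by simp
  qed
  finally show ?thesis using lhs step1 unfolding F_def by simp
qed

end
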